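(* Let $V\subseteq\mathcal{B}(H)$ be an operator system with unit $e$ and let $\varepsilon\ge1$. Let $V_\varepsilon^+=\{v\in V_h:v\ge\|v\|\frac{\varepsilon-1}{\varepsilon+1}e\}$. Then $V_\varepsilon^+$ is a unital cone and $S(V_\varepsilon^+)=S_\varepsilon=A_\varepsilon$, where $S_\varepsilon=\{\varphi\in V^\ast:\varphi=\varphi^\ast,\ \varphi(e)=1,\ \|\varphi\|\le\varepsilon\}$ and $A_\varepsilon=\{(1+s)\phi-s\psi:\phi,\psi\in S(V_+),\ 0\le s\le\frac{\varepsilon-1}{2}\}$.
   Context: An operator system is a self-adjoint subspace of $\mathcal{B}(H)$ containing the identity $e$; $V_h$ denotes hermitian elements, $V_+=V\cap\mathcal{B}(H)_+$, and $\le$ is the operator order. $\varphi^\ast$ is defined by $\langle x,\varphi^\ast\rangle=\overline{\langle x^\ast,\varphi\rangle}$. A cone $\mathfrak{c}\subseteq V_h$ is unital if for every $v\in V_h$ there is $r\ge0$ with $v+re\in\mathfrak{c}$. For a cone $\mathfrak{c}$, $S(\mathfrak{c})$ is the set of linear functionals $\varphi$ with $\varphi(\mathfrak{c})\ge0$ and $\varphi(e)=1$. *)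

theory Defs
  imports "HOL-Analysis.Analysis"
begin

class complex_vector = real_vector +
  fixes scaleC :: "complex \<Rightarrow> 'a \<Rightarrow> 'a" (infixr \<open>*\<^sub>C\<close> 75)
  assumes scaleC_add_right: "a *\<^sub>C (x + y) = a *\<^sub>C x + a *\<^sub>C y"
    and scaleC_add_left: "(a + b) *\<^sub>C x = a *\<^sub>C x + b *\<^sub>C x"
    and scaleC_scaleC: "a *\<^sub>C (b *\<^sub>C x) = (a * b) *\<^sub>C x"
    and scaleC_one: "1 *\<^sub>C x = x"
    and scaleR_scaleC: "r *\<^sub>R x = complex_of_real r *\<^sub>C x"

class complex_inner = complex_vector + real_normed_vector +
  fixes cinner :: "'a \<Rightarrow> 'a \<Rightarrow> complex"
  assumes cinner_commute: "cinner x y = cnj (cinner y x)"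
    and cinner_add_right: "cinner x (y + z) = cinner x y + cinner x z"
    and cinner_scaleC_right: "cinner x (a *\<^sub>C y) = a * cinner x y"
    and cinner_self_norm: "cinner x x = complex_of_real ((norm x)\<^sup>2)"

class chilbert_space = complex_inner + complete_space

instantiation complex :: complex_vector
begin
definition scaleC_complex :: "complex \<Rightarrow> complex \<Rightarrow> complex" where
  "scaleC_complex a x = a * x"
instance
proof
  fix a b :: complex and x y :: complex and r :: real
  show "a *\<^sub>C (x + y) = a *\<^sub>C x + a *\<^sub>C y" by (simp add: scaleC_complex_def distrib_left)
  show "(a + b) *\<^sub>C x = a *\<^sub>C x + b *\<^sub>C x" by (simp add: scaleC_complex_def distrib_right)
  show "a *\<^sub>C (b *\<^sub>C x) = (a * b) *\<^sub>C x" by (simp add: scaleC_complex_def mult.assoc)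
  show "1 *\<^sub>C x = x" by (simp add: scaleC_complex_def)
  show "r *\<^sub>R x = complex_of_real r *\<^sub>C x" by (simp add: scaleC_complex_def scaleR_conv_of_real)
qed
end

instantiation complex :: complex_inner
begin
definition cinner_complex :: "complex \<Rightarrow> complex \<Rightarrow> complex" where
  "cinner_complex x y = cnj x * y"
instance
proof
  fix x y z a :: complex
  show "cinner x y = cnj (cinner y x)" by (simp add: cinner_complex_def mult.commute)
  show "cinner x (y + z) = cinner x y + cinner x z" by (simp add: cinner_complex_def distrib_left)
  show "cinner x (a *\<^sub>C y) = a * cinner x y" by (simp add: cinner_complex_def scaleC_complex_def mult.left_commute)
  show "cinner x x = complex_of_real ((norm x)\<^sup>2)" using complex_norm_square[of x] by (simp add: cinner_complex_def mult.commute)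
qed
end

instance complex :: chilbert_space ..

definition clinear :: "('a::complex_vector \<Rightarrow> 'a) \<Rightarrow> bool" where
  "clinear T \<longleftrightarrow> (\<forall>x y. T (x + y) = T x + T y) \<and> (\<forall>c x. T (c *\<^sub>C x) = c *\<^sub>C T x)"

definition BH :: "('h::chilbert_space \<Rightarrow> 'h) set" where
  "BH = {T. clinear T \<and> (\<exists>K. \<forall>x. norm (T x) \<le> norm x * K)}"

definition cadjoint :: "('h::chilbert_space \<Rightarrow> 'h) \<Rightarrow> ('h \<Rightarrow> 'h)" where
  "cadjoint T = (THE S. \<forall>x y. cinner (T x) y = cinner x (S y))"

definition pos_op :: "('h::chilbert_space \<Rightarrow> 'h) \<Rightarrow> bool" where
  "pos_op T \<longleftrightarrow> (\<forall>x. Im (cinner x (T x)) = 0 \<and> 0 \<le> Re (cinner x (T x)))"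

definition BH_pos :: "('h::chilbert_space \<Rightarrow> 'h) set" where
  "BH_pos = {T \<in> BH. pos_op T}"

definition op_le :: "('h::chilbert_space \<Rightarrow> 'h) \<Rightarrow> ('h \<Rightarrow> 'h) \<Rightarrow> bool" where
  "op_le S T \<longleftrightarrow> pos_op (\<lambda>x. T x - S x)"

definition operator_system :: "('h::chilbert_space \<Rightarrow> 'h) set \<Rightarrow> bool" where
  "operator_system V \<longleftrightarrow> V \<subseteq> BH \<and> id \<in> V
     \<and> (\<forall>S\<in>V. \<forall>T\<in>V. (\<lambda>x. S x + T x) \<in> V)
     \<and> (\<forall>c. \<forall>T\<in>V. (\<lambda>x. c *\<^sub>C T x) \<in> V)
     \<and> (\<forall>T\<in>V. cadjoint T \<in> V)"

definition herm :: "('h::chilbert_space \<Rightarrow> 'h) set \<Rightarrow> ('h \<Rightarrow> 'h) set" where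
  "herm V = {v \<in> V. cadjoint v = v}"

definition Vpos :: "('h::chilbert_space \<Rightarrow> 'h) set \<Rightarrow> ('h \<Rightarrow> 'h) set" where
  "Vpos V = V \<inter> BH_pos"

text \<open>Linear functionals on V (represented as functions vanishing off V).\<close>
definition lin_func :: "('h::chilbert_space \<Rightarrow> 'h) set \<Rightarrow> (('h \<Rightarrow> 'h) \<Rightarrow> complex) \<Rightarrow> bool" where
  "lin_func V \<phi> \<longleftrightarrow> (\<forall>S\<in>V. \<forall>T\<in>V. \<phi> (\<lambda>x. S x + T x) = \<phi> S + \<phi> T)
     \<and> (\<forall>c. \<forall>T\<in>V. \<phi> (\<lambda>x. c *\<^sub>C T x) = c * \<phi> T)
     \<and> (\<forall>T. T \<notin> V \<longrightarrow> \<phi> T = 0)"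

definition dual :: "('h::chilbert_space \<Rightarrow> 'h) set \<Rightarrow> (('h \<Rightarrow> 'h) \<Rightarrow> complex) set" where
  "dual V = {\<phi>. lin_func V \<phi> \<and> (\<exists>K. \<forall>v\<in>V. cmod (\<phi> v) \<le> K * onorm v)}"

definition fnorm :: "('h::chilbert_space \<Rightarrow> 'h) set \<Rightarrow> (('h \<Rightarrow> 'h) \<Rightarrow> complex) \<Rightarrow> real" where
  "fnorm V \<phi> = Sup {cmod (\<phi> v) | v. v \<in> V \<and> onorm v \<le> 1}"

definition fstar :: "('h::chilbert_space \<Rightarrow> 'h) set \<Rightarrow> (('h \<Rightarrow> 'h) \<Rightarrow> complex) \<Rightarrow> (('h \<Rightarrow> 'h) \<Rightarrow> complex)" where
  "fstar V \<phi> = (\<lambda>T. if T \<in> V then cnj (\<phi> (cadjoint T)) else 0)"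

definition is_cone :: "('h::chilbert_space \<Rightarrow> 'h) set \<Rightarrow> ('h \<Rightarrow> 'h) set \<Rightarrow> bool" where
  "is_cone V c \<longleftrightarrow> c \<subseteq> herm V
     \<and> (\<forall>a\<in>c. \<forall>b\<in>c. (\<lambda>x. a x + b x) \<in> c)
     \<and> (\<forall>r::real. r \<ge> 0 \<longrightarrow> (\<forall>a\<in>c. (\<lambda>x. r *\<^sub>R a x) \<in> c))"

definition unital_cone :: "('h::chilbert_space \<Rightarrow> 'h) set \<Rightarrow> ('h \<Rightarrow> 'h) set \<Rightarrow> bool" where
  "unital_cone V c \<longleftrightarrow> is_cone V c
     \<and> (\<forall>v\<in>herm V. \<exists>r::real. r \<ge> 0 \<and> (\<lambda>x. v x + r *\<^sub>R id x) \<in> c)"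

definition states :: "('h::chilbert_space \<Rightarrow> 'h) set \<Rightarrow> ('h \<Rightarrow> 'h) set \<Rightarrow> (('h \<Rightarrow> 'h) \<Rightarrow> complex) set" where
  "states V c = {\<phi>. lin_func V \<phi> \<and> (\<forall>v\<in>c. Im (\<phi> v) = 0 \<and> 0 \<le> Re (\<phi> v)) \<and> \<phi> id = 1}"

definition Veps :: "('h::chilbert_space \<Rightarrow> 'h) set \<Rightarrow> real \<Rightarrow> ('h \<Rightarrow> 'h) set" where
  "Veps V \<epsilon> = {v \<in> herm V. op_le (\<lambda>x. (onorm v * ((\<epsilon> - 1) / (\<epsilon> + 1))) *\<^sub>R id x) v}"

definition Seps :: "('h::chilbert_space \<Rightarrow> 'h) set \<Rightarrow> real \<Rightarrow> (('h \<Rightarrow> 'h) \<Rightarrow> complex) set" where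
  "Seps V \<epsilon> = {\<phi> \<in> dual V. fstar V \<phi> = \<phi> \<and> \<phi> id = 1 \<and> fnorm V \<phi> \<le> \<epsilon>}"

definition Aeps :: "('h::chilbert_space \<Rightarrow> 'h) set \<Rightarrow> real \<Rightarrow> (('h \<Rightarrow> 'h) \<Rightarrow> complex) set" where
  "Aeps V \<epsilon> = {(\<lambda>T. complex_of_real (1 + s) * \<phi> T - complex_of_real s * \<psi> T) | \<phi> \<psi> s.
      \<phi> \<in> states V (Vpos V) \<and> \<psi> \<in> states V (Vpos V) \<and> 0 \<le> s \<and> s \<le> (\<epsilon> - 1) / 2}"

end

theory Submission
  imports Defs "HOL-Library.Function_Algebras"
begin


definition subsp :: "'a::real_vector set \<Rightarrow> bool" where
  "subsp X \<longleftrightarrow> 0 \<in> X \<and> (\<forall>x\<in>X. \<forall>y\<in>X. x + y \<in> X) \<and> (\<forall>x\<in>X. \<forall>r. r *\<^sub>R x \<in> X)"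

definition sublin :: "'a::real_vector set \<Rightarrow> ('a \<Rightarrow> real) \<Rightarrow> bool" where
  "sublin X q \<longleftrightarrow> (\<forall>x\<in>X. \<forall>y\<in>X. q (x + y) \<le> q x + q y) \<and> (\<forall>x\<in>X. \<forall>t\<ge>0. q (t *\<^sub>R x) \<le> t * q x)"

lemma subsp_add: "subsp X \<Longrightarrow> x \<in> X \<Longrightarrow> y \<in> X \<Longrightarrow> x + y \<in> X" by (simp add: subsp_def)
lemma subsp_scale: "subsp X \<Longrightarrow> x \<in> X \<Longrightarrow> r *\<^sub>R x \<in> X" by (simp add: subsp_def)
lemma subsp_zero: "subsp X \<Longrightarrow> 0 \<in> X" by (simp add: subsp_def)
lemma subsp_minus: "subsp X \<Longrightarrow> x \<in> X \<Longrightarrow> - x \<in> X" using subsp_scale[of X x "-1"] by simp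

lemma sublin_add: "sublin X q \<Longrightarrow> x \<in> X \<Longrightarrow> y \<in> X \<Longrightarrow> q (x + y) \<le> q x + q y" by (simp add: sublin_def)
lemma sublin_scale: "sublin X q \<Longrightarrow> x \<in> X \<Longrightarrow> t \<ge> 0 \<Longrightarrow> q (t *\<^sub>R x) \<le> t * q x" by (simp add: sublin_def)

lemma sublin_0: assumes "subsp X" "sublin X q" shows "q 0 = 0"
proof -
  have "q (0 *\<^sub>R 0) \<le> 0 * q 0" using sublin_scale[OF assms(2) subsp_zero[OF assms(1)], of 0] by simp
  then have a: "q 0 \<le> 0" by simp
  have "q (0 + 0) \<le> q 0 + q 0" using sublin_add[OF assms(2) subsp_zero[OF assms(1)] subsp_zero[OF assms(1)]] .
  then show ?thesis using a by simp
qed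

lemma sublin_hom: assumes "subsp X" "sublin X q" "x \<in> X" "t \<ge> 0" shows "q (t *\<^sub>R x) = t * q x"
proof (cases "t = 0")
  case True then show ?thesis using sublin_0[OF assms(1,2)] by simp
next
  case False
  then have t: "t > 0" using assms(4) by simp
  have eqx: "(1/t) *\<^sub>R (t *\<^sub>R x) = x" using t by simp
  have "q ((1/t) *\<^sub>R (t *\<^sub>R x)) \<le> (1/t) * q (t *\<^sub>R x)"
    by (rule sublin_scale[OF assms(2) subsp_scale[OF assms(1,3)]]) (use t in simp)
  then have "q x \<le> (1/t) * q (t *\<^sub>R x)" by (simp only: eqx)
  then have "t * q x \<le> q (t *\<^sub>R x)" using t by (simp add: field_simps)
  then show ?thesis using sublin_scale[OF assms(2,3,4)] by simp
qed

lemma sublin_neg: assumes "subsp X" "sublin X q" "x \<in> X" shows "- q (- x) \<le> q x"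
proof -
  have "q (x + - x) \<le> q x + q (- x)" using sublin_add[OF assms(2,3) subsp_minus[OF assms(1,3)]] .
  then show ?thesis using sublin_0[OF assms(1,2)] by simp
qed

lemma cInf_add_bound:
  fixes A B :: "real set"
  assumes "A \<noteq> {}" "B \<noteq> {}" "\<And>a b. a \<in> A \<Longrightarrow> b \<in> B \<Longrightarrow> c \<le> a + b"
  shows "c \<le> Inf A + Inf B"
proof -
  have "c - b \<le> Inf A" if "b \<in> B" for b
    using assms(1,3) that by (intro cInf_greatest) (auto simp: algebra_simps)
  then have "c - Inf A \<le> b" if "b \<in> B" for b using that by (simp add: algebra_simps)
  then have "c - Inf A \<le> Inf B" using assms(2) by (intro cInf_greatest) auto
  then show ?thesis by simp
qed

lemma cInf_scale_bound:
  fixes A :: "real set"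
  assumes "A \<noteq> {}" "s > 0" "\<And>a. a \<in> A \<Longrightarrow> c \<le> s * a"
  shows "c \<le> s * Inf A"
proof -
  have "c / s \<le> Inf A" using assms by (intro cInf_greatest) (auto simp: field_simps)
  then show ?thesis using assms(2) by (simp add: field_simps)
qed

theorem hahn_banach_min:
  fixes X :: "'a::real_vector set" and p :: "'a \<Rightarrow> real"
  assumes X: "subsp X" and p: "sublin X p" and e: "e \<in> X" and pe: "p (- e) \<le> - M"
  shows "\<exists>g. (\<forall>x\<in>X. \<forall>y\<in>X. g (x + y) = g x + g y) \<and> (\<forall>x\<in>X. \<forall>r. g (r *\<^sub>R x) = r * g x)
           \<and> (\<forall>x\<in>X. g x \<le> p x) \<and> g (- e) \<le> - M"
proof -
  have me: "- e \<in> X" by (rule subsp_minus[OF X e])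
  define A where "A = {q. sublin X q \<and> (\<forall>x\<in>X. q x \<le> p x) \<and> q (- e) \<le> - M \<and> (\<forall>x. x \<notin> X \<longrightarrow> q x = 0)}"
  define P :: "('a \<Rightarrow> real) \<Rightarrow> ('a \<Rightarrow> real) \<Rightarrow> bool" where "P = (\<lambda>q1 q2. \<forall>x\<in>X. q2 x \<le> q1 x)"
  define p0 where "p0 = (\<lambda>x. if x \<in> X then p x else 0)"
  have sublin_cong: "sublin X q'" if "sublin X q" "\<And>x. x \<in> X \<Longrightarrow> q' x = q x" for q q'
    using that subsp_add[OF X] subsp_scale[OF X] unfolding sublin_def by simp
  have p0A: "p0 \<in> A"
    unfolding A_def p0_def using pe me by (auto intro: sublin_cong[OF p])
  have po: "partial_order_on A (relation_of P A)"
    unfolding partial_order_on_def preorder_on_def refl_on_def trans_def antisym_def relation_of_def P_def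
  proof (intro conjI ballI allI impI)
    show "{(a, b). (a, b) \<in> A \<times> A \<and> (\<forall>x\<in>X. b x \<le> a x)} \<subseteq> A \<times> A" by auto
    fix q assume "q \<in> A" then show "(q, q) \<in> {(a, b). (a, b) \<in> A \<times> A \<and> (\<forall>x\<in>X. b x \<le> a x)}" by auto
  next
    fix x y z
    assume "(x, y) \<in> {(a, b). (a, b) \<in> A \<times> A \<and> (\<forall>x\<in>X. b x \<le> a x)}"
      "(y, z) \<in> {(a, b). (a, b) \<in> A \<times> A \<and> (\<forall>x\<in>X. b x \<le> a x)}"
    then show "(x, z) \<in> {(a, b). (a, b) \<in> A \<times> A \<and> (\<forall>x\<in>X. b x \<le> a x)}" by force
  next
    fix x y
    assume a: "(x, y) \<in> {(a, b). (a, b) \<in> A \<times> A \<and> (\<forall>x\<in>X. b x \<le> a x)}"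
      "(y, x) \<in> {(a, b). (a, b) \<in> A \<times> A \<and> (\<forall>x\<in>X. b x \<le> a x)}"
    show "x = y"
    proof
      fix z show "x z = y z"
      proof (cases "z \<in> X")
        case True then show ?thesis using a by force
      next
        case False then show ?thesis using a by (auto simp: A_def)
      qed
    qed
  qed
  have chains: "\<exists>u\<in>A. \<forall>a\<in>C. P a u" if C: "C \<in> Chains (relation_of P A)" for C
  proof (cases "C = {}")
    case True then show ?thesis using p0A by blast
  next
    case False
    have CA: "C \<subseteq> A" using C unfolding Chains_def relation_of_def by auto
    have comp: "\<forall>x\<in>X. a x \<le> b x \<or> (\<forall>x\<in>X. b x \<le> a x)" if "a \<in> C" "b \<in> C" for a b
      using C that unfolding Chains_def relation_of_def P_def by blast
    have comp2: "(\<forall>x\<in>X. a x \<le> b x) \<or> (\<forall>x\<in>X. b x \<le> a x)" if "a \<in> C" "b \<in> C" for a b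
      using C that unfolding Chains_def relation_of_def P_def by blast
    have Cs: "sublin X q" "\<And>x. x \<in> X \<Longrightarrow> q x \<le> p x" "q (- e) \<le> - M" if "q \<in> C" for q
      using CA that by (auto simp: A_def)
    have Cne: "(\<lambda>q. q x) ` C \<noteq> {}" for x using False by simp
    have Cbdd: "bdd_below ((\<lambda>q. q x) ` C)" if "x \<in> X" for x
    proof (rule bdd_belowI[of _ "- p (- x)"])
      fix y assume "y \<in> (\<lambda>q. q x) ` C"
      then obtain q where q: "q \<in> C" "y = q x" by auto
      have "- p (- x) \<le> - q (- x)" using Cs(2)[OF q(1) subsp_minus[OF X that]] by simp
      also have "\<dots> \<le> q x" by (rule sublin_neg[OF X Cs(1)[OF q(1)] that])
      finally show "- p (- x) \<le> y" using q by simp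
    qed
    define u where "u = (\<lambda>x. if x \<in> X then Inf ((\<lambda>q. q x) ` C) else 0)"
    have ule: "u x \<le> q x" if "x \<in> X" "q \<in> C" for x q
      unfolding u_def using that Cbdd[OF that(1)] by (auto intro: cInf_lower)
    have usub: "sublin X u"
      unfolding sublin_def
    proof (intro conjI ballI allI impI)
      fix x y assume x: "x \<in> X" and y: "y \<in> X"
      have "u (x + y) \<le> a + b" if "a \<in> (\<lambda>q. q x) ` C" "b \<in> (\<lambda>q. q y) ` C" for a b
      proof -
        note ab = that
        obtain q1 where q1: "q1 \<in> C" "a = q1 x" using ab(1) by blast
        note ab = that
        obtain q2 where q2: "q2 \<in> C" "b = q2 y" using ab(2) by blast
        note q = q1(1) q2(1) q1(2) q2(2)
        show ?thesis
        proof (cases "\<forall>z\<in>X. q1 z \<le> q2 z")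
          case True
          have "u (x + y) \<le> q1 (x + y)" by (rule ule[OF subsp_add[OF X x y] q(1)])
          also have "\<dots> \<le> q1 x + q1 y" by (rule sublin_add[OF Cs(1)[OF q(1)] x y])
          also have "\<dots> \<le> a + b" using True y q by force
          finally show ?thesis .
        next
          case False
          then have "\<forall>z\<in>X. q2 z \<le> q1 z" using comp2[OF q(1,2)] by blast
          have "u (x + y) \<le> q2 (x + y)" by (rule ule[OF subsp_add[OF X x y] q(2)])
          also have "\<dots> \<le> q2 x + q2 y" by (rule sublin_add[OF Cs(1)[OF q(2)] x y])
          also have "\<dots> \<le> a + b" using \<open>\<forall>z\<in>X. q2 z \<le> q1 z\<close> x q by force
          finally show ?thesis .
        qed
      qed
      then have "u (x + y) \<le> Inf ((\<lambda>q. q x) ` C) + Inf ((\<lambda>q. q y) ` C)"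
        by (intro cInf_add_bound Cne)
      then show "u (x + y) \<le> u x + u y" using x y by (simp add: u_def)
    next
      fix x and t :: real assume x: "x \<in> X" and t: "0 \<le> t"
      show "u (t *\<^sub>R x) \<le> t * u x"
      proof (cases "t = 0")
        case True
        obtain q where q: "q \<in> C" using False by blast
        have "u 0 \<le> q 0" by (rule ule[OF subsp_zero[OF X] q])
        also have "q 0 = 0" by (rule sublin_0[OF X Cs(1)[OF q]])
        finally show ?thesis using True by simp
      next
        case False
        then have tp: "t > 0" using t by simp
        have "u (t *\<^sub>R x) \<le> t * a" if "a \<in> (\<lambda>q. q x) ` C" for a
        proof -
          note ab = that
          obtain q where q: "q \<in> C" "a = q x" using ab by auto
          have "u (t *\<^sub>R x) \<le> q (t *\<^sub>R x)" by (rule ule[OF subsp_scale[OF X x] q(1)])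
          also have "\<dots> \<le> t * q x" by (rule sublin_scale[OF Cs(1)[OF q(1)] x t])
          finally show ?thesis using q by simp
        qed
        then have "u (t *\<^sub>R x) \<le> t * Inf ((\<lambda>q. q x) ` C)" by (intro cInf_scale_bound[OF Cne tp])
        then show ?thesis using x by (simp add: u_def)
      qed
    qed
    obtain q0 where q0: "q0 \<in> C" using False by blast
    have uA: "u \<in> A"
      unfolding A_def
    proof (intro CollectI conjI allI impI ballI usub)
      fix x assume "x \<in> X"
      then show "u x \<le> p x" using ule[OF _ q0] Cs(2)[OF q0] by force
    next
      show "u (- e) \<le> - M" using ule[OF me q0] Cs(3)[OF q0] by simp
    next
      fix x assume "x \<notin> X" then show "u x = 0" by (simp add: u_def)
    qed
    show ?thesis using uA ule unfolding P_def by blast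
  qed
  obtain m where mA: "m \<in> A" and mmax: "\<And>a. a \<in> A \<Longrightarrow> P m a \<Longrightarrow> a = m"
    using predicate_Zorn[OF po chains] by blast
  have ms: "sublin X m" and mp: "\<And>x. x \<in> X \<Longrightarrow> m x \<le> p x" and me': "m (- e) \<le> - M"
    and mout: "\<And>x. x \<notin> X \<Longrightarrow> m x = 0"
    using mA by (auto simp: A_def)
  have m0: "m 0 = 0" by (rule sublin_0[OF X ms])
  have mneg: "m (- y) = - m y" if y: "y \<in> X" for y
  proof -
    define T where "T = (\<lambda>x. (\<lambda>t. m (x + t *\<^sub>R y) - t * m y) ` {t. t \<ge> 0})"
    have Tne: "T x \<noteq> {}" for x by (auto simp: T_def)
    have T0: "m x \<in> T x" for x unfolding T_def by (rule image_eqI[of _ _ 0]) auto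
    have Tbdd: "bdd_below (T x)" if x: "x \<in> X" for x
    proof (rule bdd_belowI[of _ "- m (- x)"])
      fix z assume "z \<in> T x"
      then obtain t where t: "t \<ge> 0" "z = m (x + t *\<^sub>R y) - t * m y" by (auto simp: T_def)
      have "m (t *\<^sub>R y) = m ((x + t *\<^sub>R y) + - x)" by simp
      also have "\<dots> \<le> m (x + t *\<^sub>R y) + m (- x)"
        by (rule sublin_add[OF ms subsp_add[OF X x subsp_scale[OF X y]] subsp_minus[OF X x]])
      finally show "- m (- x) \<le> z" using sublin_hom[OF X ms y t(1)] t(2) by simp
    qed
    define q' where "q' = (\<lambda>x. if x \<in> X then Inf (T x) else 0)"
    have q'le: "q' x \<le> m (x + t *\<^sub>R y) - t * m y" if "x \<in> X" "t \<ge> 0" for x t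
      unfolding q'_def using that Tbdd[OF that(1)] by (auto simp: T_def intro!: cInf_lower)
    have q'm: "q' x \<le> m x" if "x \<in> X" for x using q'le[OF that, of 0] by simp
    have q'sub: "sublin X q'"
      unfolding sublin_def
    proof (intro conjI ballI allI impI)
      fix x1 x2 assume x1: "x1 \<in> X" and x2: "x2 \<in> X"
      have "q' (x1 + x2) \<le> a + b" if "a \<in> T x1" "b \<in> T x2" for a b
      proof -
        note ab = that
        obtain t1 t2 where t: "t1 \<ge> 0" "t2 \<ge> 0" "a = m (x1 + t1 *\<^sub>R y) - t1 * m y" "b = m (x2 + t2 *\<^sub>R y) - t2 * m y"
          using ab by (auto simp: T_def)
        have "q' (x1 + x2) \<le> m ((x1 + x2) + (t1 + t2) *\<^sub>R y) - (t1 + t2) * m y"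
          using t by (intro q'le subsp_add[OF X x1 x2]) simp
        also have "(x1 + x2) + (t1 + t2) *\<^sub>R y = (x1 + t1 *\<^sub>R y) + (x2 + t2 *\<^sub>R y)"
          by (simp add: algebra_simps)
        also have "m \<dots> \<le> m (x1 + t1 *\<^sub>R y) + m (x2 + t2 *\<^sub>R y)"
          by (intro sublin_add[OF ms] subsp_add[OF X] subsp_scale[OF X] x1 x2 y)
        finally show ?thesis using t by (simp add: algebra_simps)
      qed
      then have "q' (x1 + x2) \<le> Inf (T x1) + Inf (T x2)" by (intro cInf_add_bound Tne)
      then show "q' (x1 + x2) \<le> q' x1 + q' x2" using x1 x2 by (simp add: q'_def)
    next
      fix x and s :: real assume x: "x \<in> X" and s: "0 \<le> s"
      show "q' (s *\<^sub>R x) \<le> s * q' x"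
      proof (cases "s = 0")
        case True
        then show ?thesis using q'm[OF subsp_zero[OF X]] m0 by simp
      next
        case False
        then have sp: "s > 0" using s by simp
        have "q' (s *\<^sub>R x) \<le> s * a" if "a \<in> T x" for a
        proof -
          note ab = that
          obtain t where t: "t \<ge> 0" "a = m (x + t *\<^sub>R y) - t * m y" using ab by (auto simp: T_def)
          have "q' (s *\<^sub>R x) \<le> m (s *\<^sub>R x + (s * t) *\<^sub>R y) - (s * t) * m y"
            using t sp by (intro q'le subsp_scale[OF X x]) simp
          also have "s *\<^sub>R x + (s * t) *\<^sub>R y = s *\<^sub>R (x + t *\<^sub>R y)" by (simp add: algebra_simps)
          also have "m (s *\<^sub>R (x + t *\<^sub>R y)) = s * m (x + t *\<^sub>R y)"
            using sp by (intro sublin_hom[OF X ms] subsp_add[OF X x] subsp_scale[OF X y]) simp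
          finally have "q' (s *\<^sub>R x) \<le> s * m (x + t *\<^sub>R y) - s * t * m y" .
          moreover have "s * a = s * m (x + t *\<^sub>R y) - s * t * m y" unfolding t(2) by (simp add: algebra_simps)
          ultimately show ?thesis by linarith
        qed
        then have "q' (s *\<^sub>R x) \<le> s * Inf (T x)" by (intro cInf_scale_bound[OF Tne sp])
        then show ?thesis using x by (simp add: q'_def)
      qed
    qed
    have q'A: "q' \<in> A"
      unfolding A_def
    proof (intro CollectI conjI allI impI ballI q'sub)
      fix x assume "x \<in> X" then show "q' x \<le> p x" using q'm mp by force
    next
      show "q' (- e) \<le> - M" using q'm[OF me] me' by simp
    next
      fix x assume "x \<notin> X" then show "q' x = 0" by (simp add: q'_def)
    qed
    have "P m q'" unfolding P_def using q'm by blast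
    then have q'eq: "q' = m" using mmax[OF q'A] by blast
    have "m (- y) \<le> m (- y + 1 *\<^sub>R y) - 1 * m y"
      using q'le[OF subsp_minus[OF X y], of 1] q'eq by simp
    then have "m (- y) \<le> - m y" using m0 by simp
    moreover have "- m (- y) \<le> m y" by (rule sublin_neg[OF X ms y])
    ultimately show ?thesis by simp
  qed
  have madd: "m (x + y) = m x + m y" if x: "x \<in> X" and y: "y \<in> X" for x y
  proof -
    have "m (- x + - y) \<le> m (- x) + m (- y)"
      by (rule sublin_add[OF ms subsp_minus[OF X x] subsp_minus[OF X y]])
    moreover have "- x + - y = - (x + y)" by simp
    ultimately have "- m (x + y) \<le> - m x - m y"
      using mneg[OF subsp_add[OF X x y]] mneg[OF x] mneg[OF y] by simp
    then show ?thesis using sublin_add[OF ms x y] by simp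
  qed
  have mscale: "m (r *\<^sub>R x) = r * m x" if x: "x \<in> X" for x r
  proof (cases "r \<ge> 0")
    case True then show ?thesis by (rule sublin_hom[OF X ms x])
  next
    case False
    have "m (r *\<^sub>R x) = m (- ((- r) *\<^sub>R x))" by simp
    also have "\<dots> = - m ((- r) *\<^sub>R x)" by (rule mneg[OF subsp_scale[OF X x]])
    also have "\<dots> = - ((- r) * m x)" using False by (subst sublin_hom[OF X ms x]) simp_all
    finally show ?thesis by simp
  qed
  show ?thesis using madd mscale mp me' by blast
qed



lemma cinner_add_left: fixes x :: "'a::complex_inner" shows "cinner (x + y) z = cinner x z + cinner y z"
  by (simp add: cinner_commute[of "x+y" z] cinner_add_right cinner_commute[of x z] cinner_commute[of y z])
lemma cinner_scaleC_left: "cinner (a *\<^sub>C x) y = cnj a * cinner x y"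
  by (simp add: cinner_commute[of "a *\<^sub>C x" y] cinner_scaleC_right cinner_commute[of x y])
lemma cinner_zero_right[simp]: "cinner x 0 = 0"
  using cinner_add_right[of x 0 0] by simp
lemma cinner_zero_left[simp]: "cinner 0 x = 0"
  by (simp add: cinner_commute[of 0 x])
lemma cinner_minus_right: "cinner x (- y) = - cinner x y"
proof -
  have "cinner x (- y) + cinner x y = 0" using cinner_add_right[of x "-y" y] by simp
  from minus_unique[OF this] show ?thesis by (metis minus_minus)
qed
lemma cinner_minus_left: "cinner (- x) y = - cinner x y"
  by (simp add: cinner_commute[of "-x" y] cinner_minus_right cinner_commute[of x y])
lemma cinner_diff_right: "cinner x (y - z) = cinner x y - cinner x z"
  using cinner_add_right[of x y "-z"] by (simp add: cinner_minus_right)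
lemma cinner_diff_left: "cinner (x - y) z = cinner x z - cinner y z"
  using cinner_add_left[of x "-y" z] by (simp add: cinner_minus_left)
lemma cinner_scaleR_right: "cinner x (r *\<^sub>R y) = complex_of_real r * cinner x y"
  by (simp add: scaleR_scaleC cinner_scaleC_right)
lemma cinner_scaleR_left: "cinner (r *\<^sub>R x) y = complex_of_real r * cinner x y"
  by (simp add: scaleR_scaleC cinner_scaleC_left)
lemma cinner_self_Im[simp]: "Im (cinner x x) = 0"
  by (simp add: cinner_self_norm)
lemma cinner_self_Re: "Re (cinner x x) = (norm x)\<^sup>2"
  by (simp add: cinner_self_norm)
lemma scaleC_zero_right[simp]: "a *\<^sub>C 0 = 0"
  using scaleC_add_right[of a 0 0] by simp
lemma scaleC_zero_left[simp]: "0 *\<^sub>C x = 0"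
  using scaleC_add_left[of 0 0 x] by simp
lemma scaleC_minus_right: "a *\<^sub>C (- x) = - (a *\<^sub>C x)"
proof -
  have "a *\<^sub>C (- x) + a *\<^sub>C x = 0" using scaleC_add_right[of a "-x" x] by simp
  from minus_unique[OF this] show ?thesis by (metis minus_minus)
qed
lemma scaleC_diff_right: "a *\<^sub>C (x - y) = a *\<^sub>C x - a *\<^sub>C y"
  using scaleC_add_right[of a x "-y"] by (simp add: scaleC_minus_right)
lemma scaleC_minus_left: "(- a) *\<^sub>C x = - (a *\<^sub>C x)"
proof -
  have "(- a) *\<^sub>C x + a *\<^sub>C x = 0" using scaleC_add_left[of "-a" a x] by simp
  from minus_unique[OF this] show ?thesis by (metis minus_minus)
qed
lemma scaleC_diff_left: "(a - b) *\<^sub>C x = a *\<^sub>C x - b *\<^sub>C x"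
  using scaleC_add_left[of a "-b" x] by (simp add: scaleC_minus_left)
lemma norm_scaleC: fixes x :: "'a::complex_inner" shows "norm (a *\<^sub>C x) = cmod a * norm x"
proof -
  have "cinner (a *\<^sub>C x) (a *\<^sub>C x) = (cnj a * a) * cinner x x"
    by (simp add: cinner_scaleC_left cinner_scaleC_right mult.assoc)
  then have "(norm (a *\<^sub>C x))\<^sup>2 = Re ((cnj a * a) * cinner x x)"
    by (metis cinner_self_Re)
  also have "\<dots> = (cmod a)\<^sup>2 * (norm x)\<^sup>2"
    by (simp add: cinner_self_norm complex_mult_cnj mult.commute cmod_power2)
  finally have "(norm (a *\<^sub>C x))\<^sup>2 = (cmod a * norm x)\<^sup>2" by (simp add: power_mult_distrib)
  then show ?thesis by (simp add: power2_eq_iff_nonneg)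
qed
lemma cinner_eq_zero_iff: "cinner x x = 0 \<longleftrightarrow> x = 0"
  by (simp add: cinner_self_norm)
lemma cinner_ext_right: "(\<And>z. cinner z x = cinner z y) \<Longrightarrow> x = y"
  by (metis cinner_diff_right cinner_eq_zero_iff right_minus_eq)
lemma norm_add_sq: fixes x :: "'a::complex_inner" shows "(norm (x + y))\<^sup>2 = (norm x)\<^sup>2 + (norm y)\<^sup>2 + 2 * Re (cinner x y)"
proof -
  have "cinner (x + y) (x + y) = cinner x x + cinner y y + (cinner x y + cinner y x)"
    by (simp add: cinner_add_left cinner_add_right algebra_simps)
  then have "(norm (x + y))\<^sup>2 = Re (cinner x x + cinner y y + (cinner x y + cinner y x))"
    by (metis cinner_self_Re)
  also have "\<dots> = (norm x)\<^sup>2 + (norm y)\<^sup>2 + 2 * Re (cinner x y)"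
    by (subst cinner_commute[of y x]) (simp add: cinner_self_Re)
  finally show ?thesis .
qed
lemma cauchy_schwarz: fixes x :: "'a::complex_inner" shows "cmod (cinner x y) \<le> norm x * norm y"
proof (cases "y = 0")
  case True then show ?thesis by simp
next
  case False
  define n where "n = (norm y)\<^sup>2"
  have ny: "n > 0" using False by (simp add: n_def)
  define c where "c = cinner y x"
  have cxy: "cinner x y = cnj c" unfolding c_def by (rule cinner_commute)
  define t where "t = c / complex_of_real n"
  have cyy: "cinner y y = complex_of_real n" by (simp add: n_def cinner_self_norm)
  have e1: "cnj t * c = complex_of_real ((cmod c)\<^sup>2 / n)"
    unfolding t_def by (simp add: complex_mult_cnj cmod_power2 mult.commute)
  have e2: "t * cnj c = complex_of_real ((cmod c)\<^sup>2 / n)"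
    unfolding t_def by (simp add: complex_mult_cnj cmod_power2 mult.commute)
  have e3: "cnj t * t * cinner y y = complex_of_real ((cmod c)\<^sup>2 / n)"
  proof -
    have "t * complex_of_real n = c" using ny by (simp add: t_def)
    then show ?thesis by (simp add: cyy mult.assoc e1)
  qed
  have "cinner (x - t *\<^sub>C y) (x - t *\<^sub>C y) = cinner x x - cnj t * c - t * cnj c + cnj t * t * cinner y y"
    by (simp add: cinner_diff_left cinner_diff_right cinner_scaleC_left cinner_scaleC_right algebra_simps cxy c_def)
  also have "\<dots> = cinner x x - complex_of_real ((cmod c)\<^sup>2 / n)"
    by (simp add: e1 e2 e3)
  finally have "(norm (x - t *\<^sub>C y))\<^sup>2 = (norm x)\<^sup>2 - (cmod c)\<^sup>2 / n"
    by (metis Re_complex_of_real cinner_self_Re minus_complex.simps(1))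
  then have "(cmod c)\<^sup>2 / n \<le> (norm x)\<^sup>2"
    by (metis diff_ge_0_iff_ge zero_le_power2)
  then have "(cmod c)\<^sup>2 \<le> (norm x * norm y)\<^sup>2"
    using ny by (simp add: n_def field_simps power_mult_distrib)
  then have "cmod c \<le> norm x * norm y"
    by (rule power2_le_imp_le) simp
  then show ?thesis by (simp add: cxy)
qed
lemma norm_diff_sq: fixes x :: "'a::complex_inner" shows "(norm (x - y))\<^sup>2 = (norm x)\<^sup>2 + (norm y)\<^sup>2 - 2 * Re (cinner x y)"
  using norm_add_sq[of x "-y"] by (simp add: cinner_minus_right)

lemma parallelogram: fixes x :: "'a::complex_inner" shows "(norm (x - y))\<^sup>2 = 2 * (norm x)\<^sup>2 + 2 * (norm y)\<^sup>2 - (norm (x + y))\<^sup>2"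
  using norm_add_sq[of x y] norm_diff_sq[of x y] by simp

lemma riesz:
  fixes l :: "'a::chilbert_space \<Rightarrow> complex"
  assumes add: "\<And>x y. l (x + y) = l x + l y" and sc: "\<And>c x. l (c *\<^sub>C x) = c * l x"
    and bd: "\<And>x. cmod (l x) \<le> norm x * K"
  shows "\<exists>z. \<forall>x. l x = cinner z x"
proof (cases "\<forall>x. l x = 0")
  case True then show ?thesis by (intro exI[of _ 0]) simp
next
  case False
  then obtain x1 where x1: "l x1 \<noteq> 0" by blast
  have bl: "bounded_linear l"
  proof (rule bounded_linear_intro[of _ K])
    show "l (x + y) = l x + l y" for x y by (rule add)
    show "l (r *\<^sub>R x) = r *\<^sub>R l x" for r x by (simp add: scaleR_scaleC[of r x] sc scaleR_conv_of_real)
    show "norm (l x) \<le> norm x * K" for x using bd by simp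
  qed
  have l0: "l 0 = 0" using add[of 0 0] by simp
  define x0 where "x0 = (1 / l x1) *\<^sub>C x1"
  have lx0: "l x0 = 1" using x1 by (simp add: x0_def sc)
  define A where "A = {x. l x = 1}"
  define D where "D = Inf ((\<lambda>x. (norm x)\<^sup>2) ` A)"
  have Ane: "(\<lambda>x. (norm x)\<^sup>2) ` A \<noteq> {}" using lx0 by (auto simp: A_def)
  have Abdd: "bdd_below ((\<lambda>x. (norm x)\<^sup>2) ` A)" by (rule bdd_belowI[of _ 0]) auto
  have Dle: "D \<le> (norm x)\<^sup>2" if "x \<in> A" for x
    unfolding D_def using that Abdd by (intro cInf_lower) auto
  have "\<exists>x\<in>A. (norm x)\<^sup>2 < D + 1 / real (Suc n)" for n
  proof -
    have "D < D + 1 / real (Suc n)" by simp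
    then obtain y where "y \<in> (\<lambda>x. (norm x)\<^sup>2) ` A" "y < D + 1 / real (Suc n)"
      using cInf_lessD[OF Ane] unfolding D_def by blast
    then show ?thesis by auto
  qed
  then obtain X where XA: "\<And>n. X n \<in> A" and Xn: "\<And>n. (norm (X n))\<^sup>2 < D + 1 / real (Suc n)"
    by metis
  have mid: "(1/2::real) *\<^sub>R (X m + X n) \<in> A" for m n
    using XA[of m] XA[of n] by (simp add: A_def linear_simps(5)[OF bl] linear_simps(1)[OF bl] scaleR_conv_of_real)
  have dist_le: "(norm (X m - X n))\<^sup>2 \<le> 2 / real (Suc m) + 2 / real (Suc n)" for m n
  proof -
    have "D \<le> (norm ((1/2::real) *\<^sub>R (X m + X n)))\<^sup>2" by (rule Dle[OF mid])
    then have "4 * D \<le> (norm (X m + X n))\<^sup>2" by (simp add: power_mult_distrib power2_eq_square)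
    then show ?thesis using parallelogram[of "X m" "X n"] Xn[of m] Xn[of n] by linarith
  qed
  have cau: "Cauchy X"
  proof (rule metric_CauchyI)
    fix e :: real assume e: "e > 0"
    then have "e\<^sup>2 / 4 > 0" by simp
    then obtain M where M: "inverse (real (Suc M)) < e\<^sup>2 / 4" using reals_Archimedean by blast
    show "\<exists>M. \<forall>m\<ge>M. \<forall>n\<ge>M. dist (X m) (X n) < e"
    proof (intro exI[of _ M] allI impI)
      fix m n assume mn: "m \<ge> M" "n \<ge> M"
      have "1 / real (Suc m) \<le> inverse (real (Suc M))" using mn by (simp add: inverse_eq_divide frac_le)
      moreover have "1 / real (Suc n) \<le> inverse (real (Suc M))" using mn by (simp add: inverse_eq_divide frac_le)
      ultimately have "(norm (X m - X n))\<^sup>2 < e\<^sup>2" using dist_le[of m n] M by linarith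
      then have "norm (X m - X n) < e" using e by (simp add: power_less_imp_less_base)
      then show "dist (X m) (X n) < e" by (simp add: dist_norm)
    qed
  qed
  then obtain z0 where Xz: "X \<longlonglongrightarrow> z0" using Cauchy_convergent_iff convergent_def by blast
  have "(\<lambda>n. l (X n)) \<longlonglongrightarrow> l z0" using bl Xz by (rule bounded_linear.tendsto)
  moreover have "(\<lambda>n. l (X n)) = (\<lambda>n. 1)" using XA by (simp add: A_def)
  ultimately have lz0: "l z0 = 1" using LIMSEQ_unique tendsto_const by metis
  have "(norm z0)\<^sup>2 \<le> D"
  proof (rule tendsto_le[OF _ _ _ ])
    show "(\<lambda>n. (norm (X n))\<^sup>2) \<longlonglongrightarrow> (norm z0)\<^sup>2" by (intro tendsto_intros Xz)
    show "(\<lambda>n. D + 1 / real (Suc n)) \<longlonglongrightarrow> D"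
      using tendsto_add[OF tendsto_const[of D] LIMSEQ_inverse_real_of_nat] by (simp add: inverse_eq_divide)
    show "\<forall>\<^sub>F n in sequentially. (norm (X n))\<^sup>2 \<le> D + 1 / real (Suc n)"
      using Xn less_imp_le by (intro always_eventually allI) blast
  qed simp
  then have minz: "(norm z0)\<^sup>2 \<le> (norm a)\<^sup>2" if "a \<in> A" for a using Dle[OF that] by linarith
  have orth: "cinner z0 k = 0" if lk: "l k = 0" for k
  proof -
    define c where "c = cinner z0 k"
    define s where "s = 1 / ((norm k)\<^sup>2 + 1)"
    have s0: "s > 0" unfolding s_def by (simp add: add_nonneg_pos)
    have p: "(norm k)\<^sup>2 + 1 > 0" by (metis add_pos_nonneg zero_le_power2 zero_less_one add.commute)
    have sk: "s * (norm k)\<^sup>2 < 1" using p by (simp add: s_def divide_less_eq)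
    define t where "t = - complex_of_real s * cnj c"
    have "z0 + t *\<^sub>C k \<in> A" using lz0 lk by (simp add: A_def add sc)
    then have "(norm z0)\<^sup>2 \<le> (norm (z0 + t *\<^sub>C k))\<^sup>2" by (rule minz)
    also have "\<dots> = (norm z0)\<^sup>2 + (cmod t)\<^sup>2 * (norm k)\<^sup>2 + 2 * Re (t * c)"
      by (simp add: norm_add_sq norm_scaleC cinner_scaleC_right c_def power_mult_distrib)
    also have "Re (t * c) = - s * (cmod c)\<^sup>2"
      unfolding cmod_power2 by (simp add: t_def algebra_simps power2_eq_square)
    also have "(cmod t)\<^sup>2 = s\<^sup>2 * (cmod c)\<^sup>2" using s0 by (simp add: t_def norm_mult power_mult_distrib)
    finally have "0 \<le> s * (cmod c)\<^sup>2 * (s * (norm k)\<^sup>2 - 2)" by (simp add: algebra_simps power2_eq_square)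
    moreover have "s * (norm k)\<^sup>2 - 2 < 0" using sk by simp
    ultimately have "s * (cmod c)\<^sup>2 \<le> 0" by (meson mult_pos_neg not_le)
    then have "(cmod c)\<^sup>2 \<le> 0" using s0 by (simp add: mult_le_0_iff)
    then show ?thesis by (simp add: c_def)
  qed
  have z0ne: "z0 \<noteq> 0" using lz0 l0 by auto
  define n where "n = (norm z0)\<^sup>2"
  have n0: "n > 0" using z0ne by (simp add: n_def)
  have key: "cinner z0 x = l x * complex_of_real n" for x
  proof -
    have "l (x - l x *\<^sub>C z0) = 0"
      using add[of "x - l x *\<^sub>C z0" "l x *\<^sub>C z0"] by (simp add: sc lz0)
    then have "cinner z0 (x - l x *\<^sub>C z0) = 0" by (rule orth)
    then show ?thesis by (simp add: cinner_diff_right cinner_scaleC_right cinner_self_norm n_def)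
  qed
  show ?thesis
  proof (intro exI[of _ "(1 / complex_of_real n) *\<^sub>C z0"] allI)
    fix x show "l x = cinner ((1 / complex_of_real n) *\<^sub>C z0) x"
      using n0 by (simp add: cinner_scaleC_left key)
  qed
qed

lemma BH_add: "T \<in> BH \<Longrightarrow> T (x + y) = T x + T y"
  by (simp add: BH_def clinear_def)
lemma BH_scaleC: "T \<in> BH \<Longrightarrow> T (c *\<^sub>C x) = c *\<^sub>C T x"
  by (simp add: BH_def clinear_def)
lemma BH_bl: assumes "T \<in> BH" shows "bounded_linear T"
proof -
  obtain K where K: "\<And>x. norm (T x) \<le> norm x * K" using assms by (auto simp: BH_def)
  show ?thesis
  proof (rule bounded_linear_intro[of _ K])
    show "T (x + y) = T x + T y" for x y using assms by (rule BH_add)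
    show "T (r *\<^sub>R x) = r *\<^sub>R T x" for r x using assms by (simp add: scaleR_scaleC BH_scaleC)
    show "norm (T x) \<le> norm x * K" for x by (rule K)
  qed
qed
lemma BH_zero: "T \<in> BH \<Longrightarrow> T 0 = 0"
  by (rule linear_simps(3)[OF BH_bl])
lemma BH_minus: "T \<in> BH \<Longrightarrow> T (- x) = - T x"
  by (rule linear_simps(4)[OF BH_bl])
lemma BH_diff: "T \<in> BH \<Longrightarrow> T (x - y) = T x - T y"
  by (rule linear_simps(2)[OF BH_bl])
lemma BH_scaleR: "T \<in> BH \<Longrightarrow> T (r *\<^sub>R x) = r *\<^sub>R T x"
  by (rule linear_simps(5)[OF BH_bl])
lemma BH_norm: "T \<in> BH \<Longrightarrow> norm (T x) \<le> onorm T * norm x"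
  by (rule onorm[OF BH_bl])
lemma BH_onorm_nonneg: "T \<in> BH \<Longrightarrow> 0 \<le> onorm T"
  by (rule onorm_pos_le[OF BH_bl])

lemma cadjoint_eqI:
  fixes T S :: "'h::chilbert_space \<Rightarrow> 'h"
  assumes "\<And>x y. cinner (T x) y = cinner x (S y)"
  shows "cadjoint T = S"
  unfolding cadjoint_def
proof (rule the_equality)
  show "\<forall>x y. cinner (T x) y = cinner x (S y)" using assms by blast
  fix S' assume "\<forall>x y. cinner (T x) y = cinner x (S' y)"
  then have h: "cinner x (S' y) = cinner x (S y)" for x y using assms by simp
  show "S' = S"
    apply (rule ext) apply (rule cinner_ext_right) using h by simp
qed

lemma adjoint_exists:
  fixes T :: "'h::chilbert_space \<Rightarrow> 'h"
  assumes T: "T \<in> BH"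
  shows "cinner (T x) y = cinner x (cadjoint T y)"
proof -
  obtain K where K: "\<And>x. norm (T x) \<le> norm x * K" using T by (auto simp: BH_def)
  have "\<forall>y. \<exists>z. \<forall>x. cinner y (T x) = cinner z x"
  proof
    fix y
    show "\<exists>z. \<forall>x. cinner y (T x) = cinner z x"
    proof (rule riesz[of _ "norm y * K"])
      show "cinner y (T (a + b)) = cinner y (T a) + cinner y (T b)" for a b
        by (simp add: BH_add[OF T] cinner_add_right)
      show "cinner y (T (c *\<^sub>C a)) = c * cinner y (T a)" for c a
        by (simp add: BH_scaleC[OF T] cinner_scaleC_right)
      show "cmod (cinner y (T a)) \<le> norm a * (norm y * K)" for a
      proof -
        have "cmod (cinner y (T a)) \<le> norm y * norm (T a)" by (rule cauchy_schwarz)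
        also have "\<dots> \<le> norm y * (norm a * K)" by (intro mult_left_mono K) simp
        finally show ?thesis by (simp add: algebra_simps)
      qed
    qed
  qed
  then obtain S where S: "\<And>y x. cinner y (T x) = cinner (S y) x"
    using choice[of "\<lambda>y z. \<forall>x. cinner y (T x) = cinner z x"] by blast
  have TS: "cinner (T x) y = cinner x (S y)" for x y
    using S[of y x] cinner_commute[of "T x" y] cinner_commute[of x "S y"] by simp
  then have "cadjoint T = S" by (rule cadjoint_eqI)
  then show ?thesis by (simp add: TS)
qed

definition cq :: "('h::chilbert_space \<Rightarrow> 'h) \<Rightarrow> 'h \<Rightarrow> complex" where
  "cq T u = cinner u (T u)"

definition Q :: "('h::chilbert_space \<Rightarrow> 'h) \<Rightarrow> 'h \<Rightarrow> real" where
  "Q T u = Re (cinner u (T u))"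

lemma cq_scaleC: "T \<in> BH \<Longrightarrow> cq T (c *\<^sub>C u) = (cnj c * c) * cq T u"
  by (simp add: cq_def BH_scaleC cinner_scaleC_left cinner_scaleC_right mult.assoc)

lemma polar:
  assumes T: "T \<in> BH"
  shows "4 * cinner x (T y) = cq T (x + y) - cq T (x - y) - \<i> * cq T (x + \<i> *\<^sub>C y) + \<i> * cq T (x - \<i> *\<^sub>C y)"
proof -
  have h1: "cq T (x + \<i> *\<^sub>C y) = cinner x (T x) + \<i> * cinner x (T y) - \<i> * cinner y (T x) + cinner y (T y)"
    by (simp add: cq_def BH_add[OF T] BH_scaleC[OF T] cinner_add_left cinner_add_right cinner_scaleC_left cinner_scaleC_right algebra_simps)
  have h2: "cq T (x - \<i> *\<^sub>C y) = cinner x (T x) - \<i> * cinner x (T y) + \<i> * cinner y (T x) + cinner y (T y)"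
    by (simp add: cq_def BH_diff[OF T] BH_scaleC[OF T] cinner_diff_left cinner_diff_right cinner_scaleC_left cinner_scaleC_right algebra_simps)
  have h3: "cq T (x + y) = cinner x (T x) + cinner x (T y) + cinner y (T x) + cinner y (T y)"
    by (simp add: cq_def BH_add[OF T] cinner_add_left cinner_add_right algebra_simps)
  have h4: "cq T (x - y) = cinner x (T x) - cinner x (T y) - cinner y (T x) + cinner y (T y)"
    by (simp add: cq_def BH_diff[OF T] cinner_diff_left cinner_diff_right algebra_simps)
  show ?thesis unfolding h1 h2 h3 h4 by (simp add: algebra_simps)
qed

lemma real_cq_selfadj:
  assumes T: "T \<in> BH" and r: "\<And>u. Im (cq T u) = 0"
  shows "cinner (T x) y = cinner x (T y)"
proof -
  have cr: "cnj (cq T u) = cq T u" for u using r[of u] by (simp add: complex_eq_iff)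
  have e1: "cq T (y + x) = cq T (x + y)" by (simp add: add.commute)
  have e2: "cq T (y - x) = cq T (x - y)"
  proof -
    have "y - x = (-1) *\<^sub>C (x - y)" by (simp add: scaleC_minus_left scaleC_one)
    then show ?thesis using cq_scaleC[OF T, of "-1" "x - y"] by simp
  qed
  have e3: "cq T (y + \<i> *\<^sub>C x) = cq T (x - \<i> *\<^sub>C y)"
  proof -
    have "y + \<i> *\<^sub>C x = \<i> *\<^sub>C (x - \<i> *\<^sub>C y)"
      by (simp add: scaleC_diff_right scaleC_scaleC scaleC_minus_left scaleC_one)
    then show ?thesis using cq_scaleC[OF T, of "\<i>" "x - \<i> *\<^sub>C y"] by simp
  qed
  have e4: "cq T (y - \<i> *\<^sub>C x) = cq T (x + \<i> *\<^sub>C y)"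
  proof -
    have "y - \<i> *\<^sub>C x = (- \<i>) *\<^sub>C (x + \<i> *\<^sub>C y)"
      by (simp add: scaleC_add_right scaleC_scaleC scaleC_minus_left scaleC_one)
    then show ?thesis using cq_scaleC[OF T, of "- \<i>" "x + \<i> *\<^sub>C y"] by simp
  qed
  have "4 * cinner (T x) y = cnj (4 * cinner y (T x))"
    by (simp add: cinner_commute[of "T x" y])
  also have "\<dots> = cnj (cq T (y + x) - cq T (y - x) - \<i> * cq T (y + \<i> *\<^sub>C x) + \<i> * cq T (y - \<i> *\<^sub>C x))"
    by (simp only: polar[OF T])
  also have "\<dots> = cq T (x + y) - cq T (x - y) + \<i> * cq T (x - \<i> *\<^sub>C y) - \<i> * cq T (x + \<i> *\<^sub>C y)"
    by (simp add: e1 e2 e3 e4 cr)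
  also have "\<dots> = 4 * cinner x (T y)" by (simp add: polar[OF T])
  finally show ?thesis by simp
qed

lemma id_lam: "id = (\<lambda>x. x)" by (simp add: id_def)

lemma cadjoint_id: "cadjoint (\<lambda>x::'h::chilbert_space. x) = (\<lambda>x. x)"
  by (rule cadjoint_eqI) simp

locale opsys =
  fixes V :: "('h::chilbert_space \<Rightarrow> 'h) set"
  assumes os: "operator_system V"
begin

lemma V_BH: "T \<in> V \<Longrightarrow> T \<in> BH"
  using os by (auto simp: operator_system_def)
lemma V_add: "S \<in> V \<Longrightarrow> T \<in> V \<Longrightarrow> (\<lambda>x. S x + T x) \<in> V"
  using os by (auto simp: operator_system_def)
lemma V_scaleC: "T \<in> V \<Longrightarrow> (\<lambda>x. c *\<^sub>C T x) \<in> V"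
  using os by (auto simp: operator_system_def)
lemma V_adj: "T \<in> V \<Longrightarrow> cadjoint T \<in> V"
  using os by (auto simp: operator_system_def)
lemma V_id: "(\<lambda>x. x) \<in> V"
  using os by (auto simp: operator_system_def id_lam)
lemma V_scaleR: "T \<in> V \<Longrightarrow> (\<lambda>x. r *\<^sub>R T x) \<in> V"
  by (simp add: scaleR_scaleC V_scaleC)
lemma V_minus: "T \<in> V \<Longrightarrow> (\<lambda>x. - T x) \<in> V"
  using V_scaleC[of T "-1"] by (simp add: scaleC_minus_left scaleC_one)
lemma V_diff: "S \<in> V \<Longrightarrow> T \<in> V \<Longrightarrow> (\<lambda>x. S x - T x) \<in> V"
  using V_add[of S "\<lambda>x. - T x"] V_minus[of T] by simp
lemma V_zero: "(\<lambda>x. 0) \<in> V"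
  using V_scaleC[OF V_id, of 0] by simp
lemma V_addid: "T \<in> V \<Longrightarrow> (\<lambda>x. T x + r *\<^sub>R x) \<in> V"
  using V_add[OF _ V_scaleR[OF V_id]] by blast

lemma adj_prop: "T \<in> V \<Longrightarrow> cinner (T x) y = cinner x (cadjoint T y)"
  by (rule adjoint_exists[OF V_BH])
lemma adj_prop': "T \<in> V \<Longrightarrow> cinner (cadjoint T x) y = cinner x (T y)"
  by (metis adj_prop cinner_commute)
lemma adj_adj: "T \<in> V \<Longrightarrow> cadjoint (cadjoint T) = T"
  by (rule cadjoint_eqI) (rule adj_prop')
lemma adj_add: "S \<in> V \<Longrightarrow> T \<in> V \<Longrightarrow> cadjoint (\<lambda>x. S x + T x) = (\<lambda>x. cadjoint S x + cadjoint T x)"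
  by (rule cadjoint_eqI) (simp add: cinner_add_left cinner_add_right adj_prop)
lemma adj_scaleC: "T \<in> V \<Longrightarrow> cadjoint (\<lambda>x. c *\<^sub>C T x) = (\<lambda>x. cnj c *\<^sub>C cadjoint T x)"
  by (rule cadjoint_eqI) (simp add: cinner_scaleC_left cinner_scaleC_right adj_prop)
lemma adj_scaleR: "T \<in> V \<Longrightarrow> cadjoint (\<lambda>x. r *\<^sub>R T x) = (\<lambda>x. r *\<^sub>R cadjoint T x)"
  by (rule cadjoint_eqI) (simp add: cinner_scaleR_left cinner_scaleR_right adj_prop)
lemma adj_minus: "T \<in> V \<Longrightarrow> cadjoint (\<lambda>x. - T x) = (\<lambda>x. - cadjoint T x)"
  by (rule cadjoint_eqI) (simp add: cinner_minus_left cinner_minus_right adj_prop)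
lemma adj_diff: "S \<in> V \<Longrightarrow> T \<in> V \<Longrightarrow> cadjoint (\<lambda>x. S x - T x) = (\<lambda>x. cadjoint S x - cadjoint T x)"
  by (rule cadjoint_eqI) (simp add: cinner_diff_left cinner_diff_right adj_prop)

lemma herm_V: "h \<in> herm V \<Longrightarrow> h \<in> V" by (simp add: herm_def)
lemma herm_adj: "h \<in> herm V \<Longrightarrow> cadjoint h = h" by (simp add: herm_def)
lemma herm_BH: "h \<in> herm V \<Longrightarrow> h \<in> BH" by (simp add: herm_def V_BH)
lemma hermI: "h \<in> V \<Longrightarrow> cadjoint h = h \<Longrightarrow> h \<in> herm V" by (simp add: herm_def)
lemma herm_sym: "h \<in> herm V \<Longrightarrow> cinner (h x) y = cinner x (h y)"
  by (metis adj_prop herm_V herm_adj)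
lemma herm_Im: "h \<in> herm V \<Longrightarrow> Im (cinner x (h x)) = 0"
proof -
  assume h: "h \<in> herm V"
  have "cinner x (h x) = cnj (cinner x (h x))"
    using herm_sym[OF h, of x x] cinner_commute[of "h x" x] by simp
  then have "Im (cinner x (h x)) = Im (cnj (cinner x (h x)))" by (rule arg_cong)
  then show ?thesis by simp
qed
lemma herm_cinner_real: "h \<in> herm V \<Longrightarrow> cinner x (h x) = complex_of_real (Q h x)"
  using herm_Im[of h x] by (simp add: Q_def complex_eq_iff)
lemma herm_add: "a \<in> herm V \<Longrightarrow> b \<in> herm V \<Longrightarrow> (\<lambda>x. a x + b x) \<in> herm V"
  by (simp add: herm_def V_add adj_add)
lemma herm_scaleR: "a \<in> herm V \<Longrightarrow> (\<lambda>x. r *\<^sub>R a x) \<in> herm V"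
  by (simp add: herm_def V_scaleR adj_scaleR)
lemma herm_minus: "a \<in> herm V \<Longrightarrow> (\<lambda>x. - a x) \<in> herm V"
  by (simp add: herm_def V_minus adj_minus)
lemma herm_diff: "a \<in> herm V \<Longrightarrow> b \<in> herm V \<Longrightarrow> (\<lambda>x. a x - b x) \<in> herm V"
  by (simp add: herm_def V_diff adj_diff)
lemma herm_id: "(\<lambda>x. x) \<in> herm V"
  by (simp add: herm_def V_id cadjoint_id)
lemma herm_zero: "(\<lambda>x. 0) \<in> herm V"
  using herm_scaleR[OF herm_id, of 0] by simp
lemma herm_scal: "(\<lambda>x. r *\<^sub>R x) \<in> herm V"
  using herm_scaleR[OF herm_id] .
lemma herm_addid: "h \<in> herm V \<Longrightarrow> (\<lambda>x. h x + r *\<^sub>R x) \<in> herm V"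
  using herm_add[OF _ herm_scal] by blast

lemma Q_add: "Q (\<lambda>x. a x + b x) u = Q a u + Q b u"
  by (simp add: Q_def cinner_add_right)
lemma Q_diff: "Q (\<lambda>x. a x - b x) u = Q a u - Q b u"
  by (simp add: Q_def cinner_diff_right)
lemma Q_minus: "Q (\<lambda>x. - a x) u = - Q a u"
  by (simp add: Q_def cinner_minus_right)
lemma Q_scaleR: "Q (\<lambda>x. r *\<^sub>R a x) u = r * Q a u"
  by (simp add: Q_def cinner_scaleR_right)
lemma Q_id: "Q (\<lambda>x. x) u = (norm u)\<^sup>2"
  by (simp add: Q_def cinner_self_Re)
lemma Q_scal: "Q (\<lambda>x. r *\<^sub>R x) u = r * (norm u)\<^sup>2"
  by (simp add: Q_def cinner_scaleR_right cinner_self_Re)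

lemma Q_bound: "T \<in> BH \<Longrightarrow> \<bar>Q T u\<bar> \<le> onorm T * (norm u)\<^sup>2"
proof -
  assume T: "T \<in> BH"
  have "\<bar>Q T u\<bar> \<le> cmod (cinner u (T u))" unfolding Q_def by (rule abs_Re_le_cmod)
  also have "\<dots> \<le> norm u * norm (T u)" by (rule cauchy_schwarz)
  also have "\<dots> \<le> norm u * (onorm T * norm u)" by (intro mult_left_mono BH_norm[OF T]) simp
  finally show ?thesis by (simp add: power2_eq_square algebra_simps)
qed

lemma onorm_from_Q:
  assumes h: "h \<in> herm V" and a: "a \<ge> 0" and b: "\<And>u. \<bar>Q h u\<bar> \<le> a * (norm u)\<^sup>2"
  shows "onorm h \<le> a"
proof (rule onorm_bound[OF a])
  fix x
  show "norm (h x) \<le> a * norm x"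
  proof (cases "h x = 0")
    case True then show ?thesis using a by simp
  next
    case False
    have x0: "x \<noteq> 0" using False BH_zero[OF herm_BH[OF h]] by auto
    define y where "y = (norm x / norm (h x)) *\<^sub>R h x"
    have ny: "norm y = norm x" using False by (simp add: y_def)
    have hy: "h (x + y) = h x + h y" "h (x - y) = h x - h y"
      using BH_add[OF herm_BH[OF h]] BH_diff[OF herm_BH[OF h]] by auto
    have sym: "cinner x (h y) = cnj (cinner y (h x))"
      using herm_sym[OF h, of x y] cinner_commute[of "h x" y] by simp
    have "Q h (x + y) - Q h (x - y) = 2 * Re (cinner x (h y)) + 2 * Re (cinner y (h x))"
      by (simp add: Q_def hy cinner_add_left cinner_add_right cinner_diff_left cinner_diff_right)
    also have "\<dots> = 4 * Re (cinner y (h x))" by (simp add: sym)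
    also have "Re (cinner y (h x)) = norm x * norm (h x)"
      using False by (simp add: y_def cinner_scaleR_left cinner_self_Re power2_eq_square)
    finally have eq: "Q h (x + y) - Q h (x - y) = 4 * (norm x * norm (h x))" .
    have "Q h (x + y) - Q h (x - y) \<le> a * (norm (x + y))\<^sup>2 + a * (norm (x - y))\<^sup>2"
      using b[of "x + y"] b[of "x - y"] by (simp add: abs_le_iff)
    also have "\<dots> = a * (2 * (norm x)\<^sup>2 + 2 * (norm y)\<^sup>2)"
    proof -
      have pg: "(norm (x + y))\<^sup>2 + (norm (x - y))\<^sup>2 = 2 * (norm x)\<^sup>2 + 2 * (norm y)\<^sup>2"
        using parallelogram[of x y] by linarith
      show ?thesis by (simp only: distrib_left[symmetric] pg)
    qed
    also have "\<dots> = 4 * (norm x * (a * norm x))" using ny by (simp add: power2_eq_square algebra_simps)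
    finally have "norm x * norm (h x) \<le> norm x * (a * norm x)" using eq by simp
    then show ?thesis using x0 by simp
  qed
qed

lemma Vpos_herm: "P \<in> Vpos V \<Longrightarrow> P \<in> herm V"
proof -
  assume P: "P \<in> Vpos V"
  then have PV: "P \<in> V" and PB: "P \<in> BH" and pp: "pos_op P" by (auto simp: Vpos_def BH_pos_def)
  have "Im (cq P u) = 0" for u using pp by (simp add: pos_op_def cq_def)
  then have "cinner (P x) y = cinner x (P y)" for x y by (rule real_cq_selfadj[OF PB])
  then have "cadjoint P = P" by (rule cadjoint_eqI)
  then show ?thesis using PV by (simp add: herm_def)
qed

lemma Vpos_Q: "P \<in> Vpos V \<Longrightarrow> 0 \<le> Q P u"
  by (simp add: Vpos_def BH_pos_def pos_op_def Q_def)

lemma VposI: "h \<in> herm V \<Longrightarrow> (\<And>u. 0 \<le> Q h u) \<Longrightarrow> h \<in> Vpos V"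
  by (simp add: Vpos_def BH_pos_def pos_op_def herm_V herm_BH herm_Im Q_def[symmetric])

lemma herm_Q_bound: "h \<in> herm V \<Longrightarrow> \<bar>Q h u\<bar> \<le> onorm h * (norm u)\<^sup>2"
  by (rule Q_bound[OF herm_BH])

end

lemma vec1: fixes a b :: "'a::complex_vector"
  shows "(1/2) *\<^sub>C (a + b) + \<i> *\<^sub>C ((- \<i>/2) *\<^sub>C (a - b)) = a"
proof -
  have "(1/2) *\<^sub>C (a + b) + \<i> *\<^sub>C ((- \<i>/2) *\<^sub>C (a - b)) = (1/2) *\<^sub>C a + (1/2) *\<^sub>C b + ((1/2) *\<^sub>C a - (1/2) *\<^sub>C b)"
    by (simp add: scaleC_add_right scaleC_diff_right scaleC_scaleC)
  also have "\<dots> = (1/2 + 1/2) *\<^sub>C a" by (simp only: scaleC_add_left) simp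
  finally show ?thesis by (simp add: scaleC_one)
qed

lemma vec2: fixes a b :: "'a::complex_vector"
  shows "(1/2) *\<^sub>C (a + b) - \<i> *\<^sub>C ((- \<i>/2) *\<^sub>C (a - b)) = b"
proof -
  have "(1/2) *\<^sub>C (a + b) - \<i> *\<^sub>C ((- \<i>/2) *\<^sub>C (a - b)) = (1/2) *\<^sub>C a + (1/2) *\<^sub>C b - ((1/2) *\<^sub>C a - (1/2) *\<^sub>C b)"
    by (simp add: scaleC_add_right scaleC_diff_right scaleC_scaleC)
  also have "\<dots> = (1/2 + 1/2) *\<^sub>C b" by (simp only: scaleC_add_left) simp
  finally show ?thesis by (simp add: scaleC_one)
qed

lemma vec_hm: fixes a b :: "'a::complex_vector"
  shows "cnj (- \<i>/2) *\<^sub>C (b - a) = (- \<i>/2) *\<^sub>C (a - b)"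
proof -
  have "cnj (- \<i>/2) = - (- \<i>/2)" by simp
  then have "cnj (- \<i>/2) *\<^sub>C (b - a) = - ((- \<i>/2) *\<^sub>C (b - a))" by (simp only: scaleC_minus_left)
  also have "\<dots> = (- \<i>/2) *\<^sub>C (- (b - a))" by (simp only: scaleC_minus_right)
  finally show ?thesis by simp
qed

lemma vec_half: fixes a :: "'a::complex_vector" shows "(1/2) *\<^sub>C (a + a) = a"
proof -
  have "(1/2) *\<^sub>C (a + a) = (1/2 + 1/2) *\<^sub>C a" by (simp only: scaleC_add_right scaleC_add_left)
  then show ?thesis by (simp add: scaleC_one)
qed

lemma vec_add2: fixes a b a' b' :: "'a::complex_vector"
  shows "c *\<^sub>C ((a + a') + (b + b')) = c *\<^sub>C (a + b) + c *\<^sub>C (a' + b')"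
  by (simp add: scaleC_add_right algebra_simps)
lemma vec_diff2: fixes a b a' b' :: "'a::complex_vector"
  shows "c *\<^sub>C ((a + a') - (b + b')) = c *\<^sub>C (a - b) + c *\<^sub>C (a' - b')"
  by (simp add: scaleC_add_right scaleC_diff_right algebra_simps)
lemma vec_scaleR: fixes a b :: "'a::complex_vector"
  shows "c *\<^sub>C (r *\<^sub>R a + r *\<^sub>R b) = r *\<^sub>R (c *\<^sub>C (a + b))"
  by (simp add: scaleR_scaleC scaleC_add_right scaleC_scaleC mult.commute)
lemma vec_scaleR': fixes a b :: "'a::complex_vector"
  shows "c *\<^sub>C (r *\<^sub>R a - r *\<^sub>R b) = r *\<^sub>R (c *\<^sub>C (a - b))"
  by (simp add: scaleR_scaleC scaleC_diff_right scaleC_scaleC mult.commute)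
lemma vec_i1: fixes a b :: "'a::complex_vector"
  shows "(1/2) *\<^sub>C (\<i> *\<^sub>C a + cnj \<i> *\<^sub>C b) = - ((- \<i>/2) *\<^sub>C (a - b))"
proof -
  have "(1/2) *\<^sub>C (\<i> *\<^sub>C a + cnj \<i> *\<^sub>C b) = (\<i>/2) *\<^sub>C a + (- \<i>/2) *\<^sub>C b"
    by (simp add: scaleC_add_right scaleC_scaleC)
  also have "- ((- \<i>/2) *\<^sub>C (a - b)) = (\<i>/2) *\<^sub>C a + (- \<i>/2) *\<^sub>C b"
    by (simp add: scaleC_diff_right scaleC_minus_left)
  finally show ?thesis by simp
qed
lemma vec_i2: fixes a b :: "'a::complex_vector"
  shows "(- \<i>/2) *\<^sub>C (\<i> *\<^sub>C a - cnj \<i> *\<^sub>C b) = (1/2) *\<^sub>C (a + b)"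
  by (simp add: scaleC_add_right scaleC_diff_right scaleC_scaleC scaleC_minus_left)

definition Hp :: "('h::chilbert_space \<Rightarrow> 'h) \<Rightarrow> 'h \<Rightarrow> 'h" where
  "Hp T = (\<lambda>x. (1/2) *\<^sub>C (T x + cadjoint T x))"
definition Hm :: "('h::chilbert_space \<Rightarrow> 'h) \<Rightarrow> 'h \<Rightarrow> 'h" where
  "Hm T = (\<lambda>x. (- \<i>/2) *\<^sub>C (T x - cadjoint T x))"

context opsys begin

lemma Hp_V: "T \<in> V \<Longrightarrow> Hp T \<in> V"
  unfolding Hp_def by (intro V_scaleC V_add V_adj)
lemma Hm_V: "T \<in> V \<Longrightarrow> Hm T \<in> V"
  unfolding Hm_def by (intro V_scaleC V_diff V_adj)
lemma Hp_herm: "T \<in> V \<Longrightarrow> Hp T \<in> herm V"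
proof (rule hermI[OF Hp_V])
  assume T: "T \<in> V"
  have "cadjoint (Hp T) = (\<lambda>x. cnj (1/2) *\<^sub>C (cadjoint T x + cadjoint (cadjoint T) x))"
    unfolding Hp_def by (simp add: adj_scaleC V_add V_adj T adj_add)
  also have "\<dots> = Hp T" unfolding Hp_def adj_adj[OF T] by (simp add: add.commute)
  finally show "cadjoint (Hp T) = Hp T" .
qed
lemma Hm_herm: "T \<in> V \<Longrightarrow> Hm T \<in> herm V"
proof (rule hermI[OF Hm_V])
  assume T: "T \<in> V"
  have "cadjoint (Hm T) = (\<lambda>x. cnj (- \<i>/2) *\<^sub>C (cadjoint T x - cadjoint (cadjoint T) x))"
    unfolding Hm_def by (simp only: adj_scaleC V_diff V_adj T adj_diff)
  also have "\<dots> = Hm T" unfolding Hm_def adj_adj[OF T] by (simp only: vec_hm)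
  finally show "cadjoint (Hm T) = Hm T" .
qed
lemma decomp: "T \<in> V \<Longrightarrow> T = (\<lambda>x. Hp T x + \<i> *\<^sub>C Hm T x)"
  unfolding Hp_def Hm_def by (simp only: vec1)
lemma decomp_adj: "T \<in> V \<Longrightarrow> cadjoint T = (\<lambda>x. Hp T x - \<i> *\<^sub>C Hm T x)"
  unfolding Hp_def Hm_def by (simp only: vec2)
lemma Hp_herm_eq: "h \<in> herm V \<Longrightarrow> Hp h = h"
  unfolding Hp_def by (simp add: herm_adj vec_half)
lemma Hm_herm_eq: "h \<in> herm V \<Longrightarrow> Hm h = (\<lambda>x. 0)"
  unfolding Hm_def by (simp add: herm_adj)
lemma Hp_add: "S \<in> V \<Longrightarrow> T \<in> V \<Longrightarrow> Hp (\<lambda>x. S x + T x) = (\<lambda>x. Hp S x + Hp T x)"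
  unfolding Hp_def by (simp add: adj_add vec_add2)
lemma Hm_add: "S \<in> V \<Longrightarrow> T \<in> V \<Longrightarrow> Hm (\<lambda>x. S x + T x) = (\<lambda>x. Hm S x + Hm T x)"
  unfolding Hm_def by (simp add: adj_add vec_diff2)
lemma Hp_scaleR: "T \<in> V \<Longrightarrow> Hp (\<lambda>x. r *\<^sub>R T x) = (\<lambda>x. r *\<^sub>R Hp T x)"
  unfolding Hp_def by (simp only: adj_scaleR vec_scaleR)
lemma Hm_scaleR: "T \<in> V \<Longrightarrow> Hm (\<lambda>x. r *\<^sub>R T x) = (\<lambda>x. r *\<^sub>R Hm T x)"
  unfolding Hm_def by (simp only: adj_scaleR vec_scaleR')
lemma Hp_i: "T \<in> V \<Longrightarrow> Hp (\<lambda>x. \<i> *\<^sub>C T x) = (\<lambda>x. - Hm T x)"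
  unfolding Hp_def Hm_def by (simp only: adj_scaleC vec_i1)
lemma Hm_i: "T \<in> V \<Longrightarrow> Hm (\<lambda>x. \<i> *\<^sub>C T x) = Hp T"
  unfolding Hp_def Hm_def by (simp only: adj_scaleC vec_i2)

end
context opsys begin

lemma lf_add: "lin_func V \<phi> \<Longrightarrow> S \<in> V \<Longrightarrow> T \<in> V \<Longrightarrow> \<phi> (\<lambda>x. S x + T x) = \<phi> S + \<phi> T"
  by (simp add: lin_func_def)
lemma lf_scaleC: "lin_func V \<phi> \<Longrightarrow> T \<in> V \<Longrightarrow> \<phi> (\<lambda>x. c *\<^sub>C T x) = c * \<phi> T"
  by (simp add: lin_func_def)
lemma lf_out: "lin_func V \<phi> \<Longrightarrow> T \<notin> V \<Longrightarrow> \<phi> T = 0"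
  by (simp add: lin_func_def)
lemma lf_scaleR: "lin_func V \<phi> \<Longrightarrow> T \<in> V \<Longrightarrow> \<phi> (\<lambda>x. r *\<^sub>R T x) = complex_of_real r * \<phi> T"
  by (simp add: scaleR_scaleC lf_scaleC)
lemma lf_minus: "lin_func V \<phi> \<Longrightarrow> T \<in> V \<Longrightarrow> \<phi> (\<lambda>x. - T x) = - \<phi> T"
  using lf_scaleC[of \<phi> T "-1"] by (simp add: scaleC_minus_left scaleC_one)
lemma lf_diff: "lin_func V \<phi> \<Longrightarrow> S \<in> V \<Longrightarrow> T \<in> V \<Longrightarrow> \<phi> (\<lambda>x. S x - T x) = \<phi> S - \<phi> T"
  using lf_add[of \<phi> S "\<lambda>x. - T x"] lf_minus[of \<phi> T] V_minus[of T] by simp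
lemma lf_zero: "lin_func V \<phi> \<Longrightarrow> \<phi> (\<lambda>x. 0) = 0"
  using lf_scaleC[OF _ V_id, of \<phi> 0] by simp
lemma lf_addid: "lin_func V \<phi> \<Longrightarrow> T \<in> V \<Longrightarrow> \<phi> (\<lambda>x. T x + r *\<^sub>R x) = \<phi> T + complex_of_real r * \<phi> (\<lambda>x. x)"
  using lf_add[OF _ _ V_scaleR[OF V_id]] lf_scaleR[OF _ V_id] by simp

lemma lf_decomp: "lin_func V \<phi> \<Longrightarrow> T \<in> V \<Longrightarrow> \<phi> T = \<phi> (Hp T) + \<i> * \<phi> (Hm T)"
proof -
  assume l: "lin_func V \<phi>" and T: "T \<in> V"
  have "\<phi> T = \<phi> (\<lambda>x. Hp T x + \<i> *\<^sub>C Hm T x)" using decomp[OF T] by simp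
  also have "\<dots> = \<phi> (Hp T) + \<i> * \<phi> (Hm T)"
    using lf_add[OF l Hp_V[OF T] V_scaleC[OF Hm_V[OF T]]] lf_scaleC[OF l Hm_V[OF T]] by simp
  finally show ?thesis .
qed
lemma lf_decomp_adj: "lin_func V \<phi> \<Longrightarrow> T \<in> V \<Longrightarrow> \<phi> (cadjoint T) = \<phi> (Hp T) - \<i> * \<phi> (Hm T)"
proof -
  assume l: "lin_func V \<phi>" and T: "T \<in> V"
  have "\<phi> (cadjoint T) = \<phi> (\<lambda>x. Hp T x - \<i> *\<^sub>C Hm T x)" using decomp_adj[OF T] by simp
  also have "\<dots> = \<phi> (Hp T) - \<i> * \<phi> (Hm T)"
    using lf_diff[OF l Hp_V[OF T] V_scaleC[OF Hm_V[OF T]]] lf_scaleC[OF l Hm_V[OF T]] by simp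
  finally show ?thesis .
qed

lemma real_eq: "Im z = 0 \<Longrightarrow> z = complex_of_real (Re z)"
  by (simp add: complex_eq_iff)

lemma lf_fstar:
  assumes l: "lin_func V \<phi>" and r: "\<And>h. h \<in> herm V \<Longrightarrow> Im (\<phi> h) = 0"
  shows "fstar V \<phi> = \<phi>"
proof
  fix T show "fstar V \<phi> T = \<phi> T"
  proof (cases "T \<in> V")
    case True
    have a: "\<phi> (Hp T) = complex_of_real (Re (\<phi> (Hp T)))" by (rule real_eq[OF r[OF Hp_herm[OF True]]])
    have b: "\<phi> (Hm T) = complex_of_real (Re (\<phi> (Hm T)))" by (rule real_eq[OF r[OF Hm_herm[OF True]]])
    have "fstar V \<phi> T = cnj (\<phi> (Hp T) - \<i> * \<phi> (Hm T))"
      using True by (simp add: fstar_def lf_decomp_adj[OF l])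
    also have "\<dots> = \<phi> (Hp T) + \<i> * \<phi> (Hm T)" by (subst a, subst b, simp, subst (2) a, subst b, simp)
    also have "\<dots> = \<phi> T" by (rule lf_decomp[OF l True, symmetric])
    finally show ?thesis .
  next
    case False then show ?thesis by (simp add: fstar_def lf_out[OF l])
  qed
qed

lemma onorm_scaleC_le: "T \<in> BH \<Longrightarrow> onorm (\<lambda>x. c *\<^sub>C T x) \<le> cmod c * onorm T"
proof (rule onorm_bound)
  assume T: "T \<in> BH"
  show "0 \<le> cmod c * onorm T" using BH_onorm_nonneg[OF T] by simp
  fix x show "norm (c *\<^sub>C T x) \<le> cmod c * onorm T * norm x"
    using BH_norm[OF T, of x] by (simp add: norm_scaleC mult.assoc mult_left_mono)
qed

lemma onorm_Hp_le: assumes T: "T \<in> V" shows "onorm (Hp T) \<le> onorm T"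
proof (rule onorm_from_Q[OF Hp_herm[OF T] BH_onorm_nonneg[OF V_BH[OF T]]])
  fix u
  have "cinner u (cadjoint T u) = cnj (cinner u (T u))"
    using adj_prop[OF T, of u u] cinner_commute[of "T u" u] by simp
  then have "Q (Hp T) u = Re (cinner u (T u))"
    by (simp add: Q_def Hp_def cinner_scaleC_right cinner_add_right)
  then have "\<bar>Q (Hp T) u\<bar> = \<bar>Q T u\<bar>" by (simp add: Q_def)
  also have "\<dots> \<le> onorm T * (norm u)\<^sup>2" by (rule Q_bound[OF V_BH[OF T]])
  finally show "\<bar>Q (Hp T) u\<bar> \<le> onorm T * (norm u)\<^sup>2" .
qed

lemma lf_bound:
  assumes l: "lin_func V \<phi>" and r: "\<And>h. h \<in> herm V \<Longrightarrow> Im (\<phi> h) = 0"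
    and K: "K \<ge> 0" and b: "\<And>h. h \<in> herm V \<Longrightarrow> \<bar>Re (\<phi> h)\<bar> \<le> K * onorm h"
    and T: "T \<in> V"
  shows "cmod (\<phi> T) \<le> K * onorm T"
proof (cases "\<phi> T = 0")
  case True then show ?thesis using K BH_onorm_nonneg[OF V_BH[OF T]] by simp
next
  case False
  define w where "w = cnj (\<phi> T) / complex_of_real (cmod (\<phi> T))"
  have cw: "cmod w = 1" using False by (simp add: w_def norm_divide)
  define S where "S = (\<lambda>x. w *\<^sub>C T x)"
  have SV: "S \<in> V" unfolding S_def by (rule V_scaleC[OF T])
  have phS: "\<phi> S = complex_of_real (cmod (\<phi> T))"
  proof -
    have cz: "cnj (\<phi> T) * \<phi> T = complex_of_real ((cmod (\<phi> T))\<^sup>2)"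
      by (metis complex_norm_square mult.commute)
    have "\<phi> S = cnj (\<phi> T) * \<phi> T / complex_of_real (cmod (\<phi> T))"
      by (simp add: S_def lf_scaleC[OF l T] w_def)
    also have "\<dots> = complex_of_real ((cmod (\<phi> T))\<^sup>2 / cmod (\<phi> T))" by (simp only: cz of_real_divide)
    also have "(cmod (\<phi> T))\<^sup>2 / cmod (\<phi> T) = cmod (\<phi> T)" using False by (simp add: power2_eq_square)
    finally show ?thesis .
  qed
  have "\<phi> S = \<phi> (Hp S) + \<i> * \<phi> (Hm S)" by (rule lf_decomp[OF l SV])
  then have "Re (\<phi> S) = Re (\<phi> (Hp S))" using r[OF Hm_herm[OF SV]] by simp
  then have "cmod (\<phi> T) = Re (\<phi> (Hp S))" using phS by simp
  also have "\<dots> \<le> K * onorm (Hp S)" using b[OF Hp_herm[OF SV]] by simp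
  also have "\<dots> \<le> K * onorm S" by (intro mult_left_mono onorm_Hp_le SV K)
  also have "onorm S \<le> cmod w * onorm T" unfolding S_def by (rule onorm_scaleC_le[OF V_BH[OF T]])
  finally show ?thesis using cw K by (simp add: mult_left_mono order_trans)
qed

end
context opsys begin

lemma pos_lf:
  assumes l: "lin_func V \<phi>" and p: "\<And>P. P \<in> Vpos V \<Longrightarrow> Im (\<phi> P) = 0 \<and> 0 \<le> Re (\<phi> P)"
  shows "\<And>h. h \<in> herm V \<Longrightarrow> Im (\<phi> h) = 0"
    and "\<And>h. h \<in> herm V \<Longrightarrow> \<bar>Re (\<phi> h)\<bar> \<le> Re (\<phi> (\<lambda>x. x)) * onorm h"
proof -
  have eP: "(\<lambda>x. x) \<in> Vpos V" by (rule VposI[OF herm_id]) (simp add: Q_id)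
  have ie: "Im (\<phi> (\<lambda>x. x)) = 0" using p[OF eP] by simp
  fix h assume h: "h \<in> herm V"
  define n where "n = onorm h"
  have hb: "\<bar>Q h u\<bar> \<le> n * (norm u)\<^sup>2" for u unfolding n_def by (rule herm_Q_bound[OF h])
  have w1: "(\<lambda>x. h x + n *\<^sub>R x) \<in> Vpos V"
  proof (rule VposI[OF herm_addid[OF h]])
    fix u show "0 \<le> Q (\<lambda>x. h x + n *\<^sub>R x) u" using hb[of u] by (simp add: Q_add Q_scal abs_le_iff)
  qed
  have w2: "(\<lambda>x. - h x + n *\<^sub>R x) \<in> Vpos V"
  proof (rule VposI[OF herm_addid[OF herm_minus[OF h]]])
    fix u show "0 \<le> Q (\<lambda>x. - h x + n *\<^sub>R x) u"
      using hb[of u] Q_add[of "\<lambda>x. - h x" "\<lambda>x. n *\<^sub>R x" u] by (simp add: Q_minus Q_scal abs_le_iff)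
  qed
  have f1: "\<phi> (\<lambda>x. h x + n *\<^sub>R x) = \<phi> h + complex_of_real n * \<phi> (\<lambda>x. x)"
    by (rule lf_addid[OF l herm_V[OF h]])
  have f2: "\<phi> (\<lambda>x. - h x + n *\<^sub>R x) = - \<phi> h + complex_of_real n * \<phi> (\<lambda>x. x)"
    using lf_addid[OF l V_minus[OF herm_V[OF h]]] lf_minus[OF l herm_V[OF h]] by simp
  show "Im (\<phi> h) = 0" using p[OF w1] f1 ie by simp
  show "\<bar>Re (\<phi> h)\<bar> \<le> Re (\<phi> (\<lambda>x. x)) * onorm h"
  proof -
    have r1: "0 \<le> Re (\<phi> h) + n * Re (\<phi> (\<lambda>x. x))" using p[OF w1] f1 ie by simp
    from p[OF w2] have "0 \<le> Re (\<phi> (\<lambda>x. - h x + n *\<^sub>R x))" by (rule conjunct2)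
    then have "0 \<le> Re (- \<phi> h + complex_of_real n * \<phi> (\<lambda>x. x))" by (simp only: f2)
    then have r2: "0 \<le> - Re (\<phi> h) + n * Re (\<phi> (\<lambda>x. x))" using ie by simp
    show ?thesis using r1 r2 by (simp add: n_def abs_le_iff algebra_simps)
  qed
qed

lemma state_props:
  assumes s: "\<phi> \<in> states V (Vpos V)"
  shows "lin_func V \<phi>" "\<phi> (\<lambda>x. x) = 1" "\<And>h. h \<in> herm V \<Longrightarrow> Im (\<phi> h) = 0"
    "\<And>T. T \<in> V \<Longrightarrow> cmod (\<phi> T) \<le> onorm T" "fstar V \<phi> = \<phi>"
proof -
  show l: "lin_func V \<phi>" using s by (simp add: states_def)
  show e: "\<phi> (\<lambda>x. x) = 1" using s by (simp add: states_def id_lam)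
  have p: "\<And>P. P \<in> Vpos V \<Longrightarrow> Im (\<phi> P) = 0 \<and> 0 \<le> Re (\<phi> P)" using s by (simp add: states_def)
  show r: "\<And>h. h \<in> herm V \<Longrightarrow> Im (\<phi> h) = 0" by (rule pos_lf(1)[OF l p])
  show "\<And>T. T \<in> V \<Longrightarrow> cmod (\<phi> T) \<le> onorm T"
    using lf_bound[OF l r, of 1] pos_lf(2)[OF l p] e by simp
  show "fstar V \<phi> = \<phi>" by (rule lf_fstar[OF l r])
qed

lemma onorm_add_le: "S \<in> BH \<Longrightarrow> T \<in> BH \<Longrightarrow> onorm (\<lambda>x. S x + T x) \<le> onorm S + onorm T"
  by (rule onorm_triangle[OF BH_bl BH_bl])
lemma onorm_scal_le: "onorm (\<lambda>x::'h. r *\<^sub>R x) \<le> \<bar>r\<bar>"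
proof -
  have "onorm (\<lambda>x::'h. r *\<^sub>R x) = \<bar>r\<bar> * onorm (\<lambda>x::'h. x)"
    by (rule onorm_scaleR[OF bounded_linear_ident])
  also have "\<dots> \<le> \<bar>r\<bar> * 1" by (intro mult_left_mono onorm_id_le) simp
  finally show ?thesis by simp
qed
lemma onorm_addid_le: "h \<in> V \<Longrightarrow> onorm (\<lambda>x. h x + r *\<^sub>R x) \<le> onorm h + \<bar>r\<bar>"
  using onorm_add_le[OF V_BH V_BH[OF V_scaleR[OF V_id]], of h r] onorm_scal_le[of r] by simp

lemma fnorm_bound:
  assumes d: "\<phi> \<in> dual V" and T: "T \<in> V"
  shows "cmod (\<phi> T) \<le> fnorm V \<phi> * onorm T"
proof -
  have l: "lin_func V \<phi>" using d by (simp add: dual_def)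
  obtain K where K: "\<And>v. v \<in> V \<Longrightarrow> cmod (\<phi> v) \<le> K * onorm v" using d by (auto simp: dual_def)
  have bdd: "bdd_above {cmod (\<phi> v) |v. v \<in> V \<and> onorm v \<le> 1}"
  proof (rule bdd_aboveI[of _ "\<bar>K\<bar>"])
    fix y assume "y \<in> {cmod (\<phi> v) |v. v \<in> V \<and> onorm v \<le> 1}"
    then obtain v where v: "v \<in> V" "onorm v \<le> 1" "y = cmod (\<phi> v)" by auto
    have "K * onorm v \<le> \<bar>K\<bar> * onorm v" by (intro mult_right_mono BH_onorm_nonneg V_BH v) simp
    also have "\<dots> \<le> \<bar>K\<bar> * 1" by (intro mult_left_mono v) simp
    finally show "y \<le> \<bar>K\<bar>" using K[OF v(1)] v(3) by simp
  qed
  show ?thesis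
  proof (cases "onorm T = 0")
    case True
    then have "T = (\<lambda>x. 0)" using onorm_eq_0[OF BH_bl[OF V_BH[OF T]]] by auto
    then show ?thesis using lf_zero[OF l] by (simp add: onorm_zero)
  next
    case False
    then have n: "onorm T > 0" using BH_onorm_nonneg[OF V_BH[OF T]] by simp
    define W where "W = (\<lambda>x. (1 / onorm T) *\<^sub>R T x)"
    have WV: "W \<in> V" unfolding W_def by (rule V_scaleR[OF T])
    have nW: "onorm W = 1" unfolding W_def using n by (simp add: onorm_scaleR[OF BH_bl[OF V_BH[OF T]]])
    have "cmod (\<phi> W) \<le> fnorm V \<phi>" unfolding fnorm_def using WV nW bdd by (intro cSup_upper) auto
    moreover have "\<phi> W = complex_of_real (1 / onorm T) * \<phi> T" unfolding W_def by (rule lf_scaleR[OF l T])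
    ultimately have "cmod (\<phi> T) / onorm T \<le> fnorm V \<phi>" using n by (simp add: norm_mult norm_divide)
    then show ?thesis using n by (simp add: field_simps)
  qed
qed

lemma fnorm_le:
  assumes l: "lin_func V \<phi>" and b: "\<And>T. T \<in> V \<Longrightarrow> cmod (\<phi> T) \<le> K * onorm T" and K: "K \<ge> 0"
  shows "fnorm V \<phi> \<le> K"
  unfolding fnorm_def
proof (rule cSup_least)
  have "cmod (\<phi> (\<lambda>x. 0)) \<in> {cmod (\<phi> v) |v. v \<in> V \<and> onorm v \<le> 1}"
    apply (rule CollectI) apply (rule exI[of _ "\<lambda>x. 0"]) using V_zero by (simp add: onorm_zero)
  then show "{cmod (\<phi> v) |v. v \<in> V \<and> onorm v \<le> 1} \<noteq> {}" by blast
  fix y assume "y \<in> {cmod (\<phi> v) |v. v \<in> V \<and> onorm v \<le> 1}"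
  then obtain v where v: "v \<in> V" "onorm v \<le> 1" "y = cmod (\<phi> v)" by auto
  have "K * onorm v \<le> K * 1" by (intro mult_left_mono v K)
  then show "y \<le> K" using b[OF v(1)] v(3) by simp
qed

end

locale opsys_eps = opsys V for V :: "('h::chilbert_space \<Rightarrow> 'h) set" +
  fixes \<epsilon> :: real
  assumes eps: "\<epsilon> \<ge> 1"
begin

definition c where "c = (\<epsilon> - 1) / (\<epsilon> + 1)"
lemma c_nonneg: "0 \<le> c" using eps by (simp add: c_def)
lemma c_lt1: "c < 1" using eps by (simp add: c_def)
lemma c_eq: "c * (\<epsilon> + 1) = \<epsilon> - 1" using eps by (simp add: c_def)

lemma Veps_iff: "v \<in> Veps V \<epsilon> \<longleftrightarrow> v \<in> herm V \<and> (\<forall>u. onorm v * c * (norm u)\<^sup>2 \<le> Q v u)"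
proof -
  have "cinner x (v x - (onorm v * c) *\<^sub>R id x) = cinner x (v x) - complex_of_real (onorm v * c * (norm x)\<^sup>2)" for x
    by (simp add: cinner_diff_right cinner_scaleR_right cinner_self_norm)
  then show ?thesis
    unfolding Veps_def op_le_def pos_op_def c_def[symmetric]
    by (auto simp: Q_def herm_Im)
qed

lemma Veps_herm: "v \<in> Veps V \<epsilon> \<Longrightarrow> v \<in> herm V" by (simp add: Veps_iff)
lemma Veps_Q: "v \<in> Veps V \<epsilon> \<Longrightarrow> onorm v * c * (norm u)\<^sup>2 \<le> Q v u" by (simp add: Veps_iff)

lemma Veps_shift: assumes h: "h \<in> herm V" shows "(\<lambda>x. h x + (\<epsilon> * onorm h) *\<^sub>R x) \<in> Veps V \<epsilon>"
  unfolding Veps_iff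
proof (intro conjI allI herm_addid h)
  fix u :: "'h::chilbert_space"
  define n where "n = onorm h"
  have n0: "0 \<le> n" unfolding n_def by (rule BH_onorm_nonneg[OF herm_BH[OF h]])
  have on: "onorm (\<lambda>x. h x + (\<epsilon> * n) *\<^sub>R x) \<le> n + \<epsilon> * n"
    using onorm_addid_le[OF herm_V[OF h], of "\<epsilon> * n"] eps n0 unfolding n_def by simp
  have "onorm (\<lambda>x. h x + (\<epsilon> * n) *\<^sub>R x) * c * (norm u)\<^sup>2 \<le> (n + \<epsilon> * n) * c * (norm u)\<^sup>2"
    by (intro mult_right_mono on c_nonneg) simp_all
  also have "(n + \<epsilon> * n) * c = n * (\<epsilon> - 1)"
  proof -
    have "(n + \<epsilon> * n) * c = n * (c * (\<epsilon> + 1))" by (simp add: algebra_simps)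
    then show ?thesis by (simp only: c_eq)
  qed
  also have "n * (\<epsilon> - 1) * (norm u)\<^sup>2 \<le> Q h u + (\<epsilon> * n) * (norm u)\<^sup>2"
    using herm_Q_bound[OF h, of u] unfolding n_def[symmetric] by (simp add: abs_le_iff algebra_simps)
  also have "\<dots> = Q (\<lambda>x. h x + (\<epsilon> * n) *\<^sub>R x) u" by (simp add: Q_add Q_scal)
  finally show "onorm (\<lambda>x. h x + (\<epsilon> * onorm h) *\<^sub>R x) * c * (norm u)\<^sup>2 \<le> Q (\<lambda>x. h x + (\<epsilon> * onorm h) *\<^sub>R x) u"
    unfolding n_def .
qed

lemma Veps_unital: "unital_cone V (Veps V \<epsilon>)"
  unfolding unital_cone_def is_cone_def
proof (intro conjI ballI allI impI)
  show "Veps V \<epsilon> \<subseteq> herm V" using Veps_herm by blast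
next
  fix a b assume a: "a \<in> Veps V \<epsilon>" and b: "b \<in> Veps V \<epsilon>"
  show "(\<lambda>x. a x + b x) \<in> Veps V \<epsilon>"
    unfolding Veps_iff
  proof (intro conjI allI herm_add Veps_herm a b)
    fix u :: "'h::chilbert_space"
    have "onorm (\<lambda>x. a x + b x) * c * (norm u)\<^sup>2 \<le> (onorm a + onorm b) * c * (norm u)\<^sup>2"
      by (intro mult_right_mono onorm_add_le herm_BH Veps_herm a b c_nonneg) simp_all
    also have "\<dots> = onorm a * c * (norm u)\<^sup>2 + onorm b * c * (norm u)\<^sup>2" by (simp add: algebra_simps)
    also have "\<dots> \<le> Q a u + Q b u" using Veps_Q[OF a, of u] Veps_Q[OF b, of u] by simp
    finally show "onorm (\<lambda>x. a x + b x) * c * (norm u)\<^sup>2 \<le> Q (\<lambda>x. a x + b x) u" by (simp add: Q_add)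
  qed
next
  fix r :: real and a assume r: "0 \<le> r" and a: "a \<in> Veps V \<epsilon>"
  show "(\<lambda>x. r *\<^sub>R a x) \<in> Veps V \<epsilon>"
    unfolding Veps_iff
  proof (intro conjI allI herm_scaleR Veps_herm a)
    fix u :: "'h::chilbert_space"
    have "onorm (\<lambda>x. r *\<^sub>R a x) = r * onorm a"
      using onorm_scaleR[OF BH_bl[OF herm_BH[OF Veps_herm[OF a]]]] r by simp
    then show "onorm (\<lambda>x. r *\<^sub>R a x) * c * (norm u)\<^sup>2 \<le> Q (\<lambda>x. r *\<^sub>R a x) u"
      using mult_left_mono[OF Veps_Q[OF a, of u] r] by (simp add: Q_scaleR mult.assoc)
  qed
next
  fix v assume v: "v \<in> herm V"
  show "\<exists>r\<ge>0. (\<lambda>x. v x + r *\<^sub>R id x) \<in> Veps V \<epsilon>"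
    using Veps_shift[OF v] eps BH_onorm_nonneg[OF herm_BH[OF v]] by (intro exI[of _ "\<epsilon> * onorm v"]) simp
qed

end
lemma lin_aux:
  fixes qp qv kU a b G :: real
  assumes "qp = qv - kU" "kU = (a + b) / 2" "G = (a - b) / 2" "b \<le> qv" "qv \<le> a"
  shows "\<bar>qp\<bar> \<le> G"
proof -
  have "qp \<le> G" using assms by (simp add: field_simps)
  moreover have "- qp \<le> G" using assms by (simp add: field_simps)
  ultimately show ?thesis by (simp add: abs_le_iff)
qed

context opsys_eps begin

lemma S1: assumes st: "\<phi> \<in> states V (Veps V \<epsilon>)" shows "\<phi> \<in> Seps V \<epsilon>"
proof -
  have l: "lin_func V \<phi>" using st by (simp add: states_def)
  have e: "\<phi> (\<lambda>x. x) = 1" using st by (simp add: states_def id_lam)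
  have p: "\<And>v. v \<in> Veps V \<epsilon> \<Longrightarrow> Im (\<phi> v) = 0 \<and> 0 \<le> Re (\<phi> v)" using st by (simp add: states_def)
  have rb: "Im (\<phi> h) = 0 \<and> \<bar>Re (\<phi> h)\<bar> \<le> \<epsilon> * onorm h" if h: "h \<in> herm V" for h
  proof -
    define n where "n = onorm h"
    have w1: "(\<lambda>x. h x + (\<epsilon> * n) *\<^sub>R x) \<in> Veps V \<epsilon>" unfolding n_def by (rule Veps_shift[OF h])
    have w2: "(\<lambda>x. - h x + (\<epsilon> * n) *\<^sub>R x) \<in> Veps V \<epsilon>"
      using Veps_shift[OF herm_minus[OF h]] unfolding n_def onorm_neg .
    have f1: "\<phi> (\<lambda>x. h x + (\<epsilon> * n) *\<^sub>R x) = \<phi> h + complex_of_real (\<epsilon> * n)"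
      using lf_addid[OF l herm_V[OF h]] e by simp
    have f2: "\<phi> (\<lambda>x. - h x + (\<epsilon> * n) *\<^sub>R x) = - \<phi> h + complex_of_real (\<epsilon> * n)"
      using lf_addid[OF l V_minus[OF herm_V[OF h]]] lf_minus[OF l herm_V[OF h]] e by simp
    from p[OF w1] have a1: "Im (\<phi> h + complex_of_real (\<epsilon> * n)) = 0 \<and> 0 \<le> Re (\<phi> h + complex_of_real (\<epsilon> * n))"
      by (simp only: f1)
    from p[OF w2] have a2: "0 \<le> Re (- \<phi> h + complex_of_real (\<epsilon> * n))"
      by (simp only: f2)
    show ?thesis using a1 a2 by (simp add: n_def abs_le_iff)
  qed
  have r: "\<And>h. h \<in> herm V \<Longrightarrow> Im (\<phi> h) = 0" using rb by blast
  have eps0: "\<epsilon> \<ge> 0" using eps by simp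
  have bd: "\<And>T. T \<in> V \<Longrightarrow> cmod (\<phi> T) \<le> \<epsilon> * onorm T"
    using lf_bound[OF l r eps0] rb by blast
  show ?thesis
    unfolding Seps_def
  proof (intro CollectI conjI)
    show "\<phi> \<in> dual V" unfolding dual_def using l bd by blast
    show "fstar V \<phi> = \<phi>" by (rule lf_fstar[OF l r])
    show "\<phi> id = 1" using e by (simp add: id_lam)
    show "fnorm V \<phi> \<le> \<epsilon>" by (rule fnorm_le[OF l bd eps0])
  qed
qed

lemma Seps_props:
  assumes s: "\<phi> \<in> Seps V \<epsilon>"
  shows "lin_func V \<phi>" "\<phi> (\<lambda>x. x) = 1" "\<And>h. h \<in> herm V \<Longrightarrow> Im (\<phi> h) = 0"
    "\<And>T. T \<in> V \<Longrightarrow> cmod (\<phi> T) \<le> \<epsilon> * onorm T"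
proof -
  have d: "\<phi> \<in> dual V" and fs: "fstar V \<phi> = \<phi>" and e: "\<phi> id = 1" and fn: "fnorm V \<phi> \<le> \<epsilon>"
    using s by (auto simp: Seps_def)
  show l: "lin_func V \<phi>" using d by (simp add: dual_def)
  show "\<phi> (\<lambda>x. x) = 1" using e by (simp add: id_lam)
  show "Im (\<phi> h) = 0" if h: "h \<in> herm V" for h
  proof -
    have "\<phi> h = fstar V \<phi> h" using fs by simp
    also have "\<dots> = cnj (\<phi> h)" using h by (simp add: fstar_def herm_V herm_adj)
    finally have "Im (\<phi> h) = Im (cnj (\<phi> h))" by simp
    then show ?thesis by simp
  qed
  show "cmod (\<phi> T) \<le> \<epsilon> * onorm T" if T: "T \<in> V" for T
  proof -
    have "cmod (\<phi> T) \<le> fnorm V \<phi> * onorm T" by (rule fnorm_bound[OF d T])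
    also have "\<dots> \<le> \<epsilon> * onorm T" by (intro mult_right_mono fn BH_onorm_nonneg V_BH T)
    finally show ?thesis .
  qed
qed

lemma S2: assumes s: "\<phi> \<in> Seps V \<epsilon>" shows "\<phi> \<in> states V (Veps V \<epsilon>)"
proof -
  note sp = Seps_props[OF s]
  have pos: "Im (\<phi> v) = 0 \<and> 0 \<le> Re (\<phi> v)" if v: "v \<in> Veps V \<epsilon>" for v
  proof
    have vh: "v \<in> herm V" by (rule Veps_herm[OF v])
    show "Im (\<phi> v) = 0" by (rule sp(3)[OF vh])
    define n where "n = onorm v"
    have n0: "n \<ge> 0" unfolding n_def by (rule BH_onorm_nonneg[OF herm_BH[OF vh]])
    define k where "k = (1 + c) / 2 * n"
    define p where "p = (\<lambda>x. v x + (- k) *\<^sub>R x)"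
    have ph: "p \<in> herm V" unfolding p_def by (rule herm_addid[OF vh])
    have a0: "(1 - c) / 2 * n \<ge> 0" using c_lt1 n0 by simp
    have Qp: "\<bar>Q p u\<bar> \<le> (1 - c) / 2 * n * (norm u)\<^sup>2" for u
    proof -
      have lo: "n * c * (norm u)\<^sup>2 \<le> Q v u" using Veps_Q[OF v, of u] by (simp add: n_def)
      have hi: "Q v u \<le> n * (norm u)\<^sup>2" using herm_Q_bound[OF vh, of u] by (simp add: n_def abs_le_iff)
      have qe: "Q p u = Q v u - k * (norm u)\<^sup>2" by (simp add: p_def Q_add Q_diff Q_scal)
      have e1: "k * (norm u)\<^sup>2 = (n * (norm u)\<^sup>2 + n * c * (norm u)\<^sup>2) / 2"
        by (simp add: k_def algebra_simps)
      have e2: "(1 - c) / 2 * n * (norm u)\<^sup>2 = (n * (norm u)\<^sup>2 - n * c * (norm u)\<^sup>2) / 2"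
        by (simp add: algebra_simps)
      show ?thesis by (rule lin_aux[OF qe e1 e2 lo hi])
    qed
    have onp: "onorm p \<le> (1 - c) / 2 * n" by (rule onorm_from_Q[OF ph a0 Qp])
    have "\<phi> p = \<phi> v + complex_of_real (- k)"
      unfolding p_def using lf_addid[OF sp(1) herm_V[OF vh], of "- k"] sp(2) by simp
    then have phv: "Re (\<phi> v) = Re (\<phi> p) + k" by simp
    have "cmod (\<phi> p) \<le> \<epsilon> * onorm p" by (rule sp(4)[OF herm_V[OF ph]])
    also have "\<dots> \<le> \<epsilon> * ((1 - c) / 2 * n)" using eps by (intro mult_left_mono onp) simp
    finally have "- Re (\<phi> p) \<le> \<epsilon> * ((1 - c) / 2 * n)" using abs_Re_le_cmod[of "\<phi> p"] by simp
    then have "Re (\<phi> v) \<ge> k - \<epsilon> * ((1 - c) / 2 * n)" using phv by simp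
    moreover have "k - \<epsilon> * ((1 - c) / 2 * n) = n / 2 * (1 - \<epsilon> + c * (\<epsilon> + 1))"
      by (simp add: k_def field_simps)
    moreover have "1 - \<epsilon> + c * (\<epsilon> + 1) = 0" using c_eq by simp
    ultimately show "0 \<le> Re (\<phi> v)" by simp
  qed
  show ?thesis unfolding states_def using sp(1) sp(2) pos by (simp add: id_lam)
qed

lemma A1: assumes a: "ch \<in> Aeps V \<epsilon>" shows "ch \<in> Seps V \<epsilon>"
proof -
  obtain \<phi> \<psi> s where chi: "ch = (\<lambda>T. complex_of_real (1 + s) * \<phi> T - complex_of_real s * \<psi> T)"
    and ph: "\<phi> \<in> states V (Vpos V)" and ps: "\<psi> \<in> states V (Vpos V)" and s0: "0 \<le> s" and s1: "s \<le> (\<epsilon> - 1) / 2"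
    using a unfolding Aeps_def by blast
  note P = state_props[OF ph] and S = state_props[OF ps]
  have l: "lin_func V ch"
    unfolding lin_func_def chi
    using lf_add[OF P(1)] lf_add[OF S(1)] lf_scaleC[OF P(1)] lf_scaleC[OF S(1)] lf_out[OF P(1)] lf_out[OF S(1)]
    by (simp add: algebra_simps)
  have cP: "cnj (\<phi> (cadjoint T)) = \<phi> T" if "T \<in> V" for T
    using fun_cong[OF P(5), of T] that by (simp add: fstar_def)
  have cS: "cnj (\<psi> (cadjoint T)) = \<psi> T" if "T \<in> V" for T
    using fun_cong[OF S(5), of T] that by (simp add: fstar_def)
  have bd: "cmod (ch T) \<le> (1 + 2 * s) * onorm T" if T: "T \<in> V" for T
  proof -
    have "cmod (ch T) \<le> cmod (complex_of_real (1 + s) * \<phi> T) + cmod (complex_of_real s * \<psi> T)"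
      unfolding chi by (rule norm_triangle_ineq4)
    also have "\<dots> = (1 + s) * cmod (\<phi> T) + s * cmod (\<psi> T)" using s0 by (simp add: norm_mult del: of_real_add)
    also have "\<dots> \<le> (1 + s) * onorm T + s * onorm T"
      using s0 by (intro add_mono mult_left_mono P(4) S(4) T) simp_all
    finally show ?thesis by (simp add: algebra_simps)
  qed
  have K0: "1 + 2 * s \<ge> 0" using s0 by simp
  show ?thesis
    unfolding Seps_def
  proof (intro CollectI conjI)
    show "ch \<in> dual V" unfolding dual_def using l bd by blast
    show "fstar V ch = ch"
    proof
      fix T show "fstar V ch T = ch T"
        by (cases "T \<in> V") (simp_all add: fstar_def chi cP cS lf_out[OF P(1)] lf_out[OF S(1)])
    qed
    show "ch id = 1" using P(2) S(2) by (simp add: chi id_lam)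
    have "fnorm V ch \<le> 1 + 2 * s" by (rule fnorm_le[OF l bd K0])
    then show "fnorm V ch \<le> \<epsilon>" using s1 by simp
  qed
qed

end


instantiation "fun" :: (type, real_vector) real_vector
begin
definition scaleR_fun :: "real \<Rightarrow> ('a \<Rightarrow> 'b) \<Rightarrow> 'a \<Rightarrow> 'b" where
  "scaleR_fun r f = (\<lambda>x. r *\<^sub>R f x)"
instance
  by standard (simp_all add: scaleR_fun_def fun_eq_iff scaleR_add_right scaleR_add_left)
end

context opsys begin

lemma lf_comb: "lin_func V a \<Longrightarrow> lin_func V b \<Longrightarrow> lin_func V (\<lambda>T. \<alpha> * a T + \<beta> * b T)"
  unfolding lin_func_def by (simp add: algebra_simps)

lemma pos_zero:
  assumes l: "lin_func V k" and p: "\<And>P. P \<in> Vpos V \<Longrightarrow> Im (k P) = 0 \<and> 0 \<le> Re (k P)"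
    and e: "k (\<lambda>x. x) = 0"
  shows "k T = 0"
proof (cases "T \<in> V")
  case True
  have "cmod (k T) \<le> 0 * onorm T"
  proof (rule lf_bound[OF l pos_lf(1)[OF l p] _ _ True])
    show "0 \<le> (0::real)" by simp
    fix h assume "h \<in> herm V"
    then show "\<bar>Re (k h)\<bar> \<le> 0 * onorm h" using pos_lf(2)[OF l p] e by fastforce
  qed
  then show ?thesis by simp
next
  case False then show ?thesis by (rule lf_out[OF l])
qed

lemma subsp_herm: "subsp (herm V)"
  unfolding subsp_def
proof (intro conjI ballI allI)
  show "0 \<in> herm V" unfolding zero_fun_def by (rule herm_zero)
  fix x y assume "x \<in> herm V" "y \<in> herm V"
  then show "x + y \<in> herm V" unfolding plus_fun_def by (rule herm_add)
next
  fix x r assume "x \<in> herm V"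
  then show "r *\<^sub>R x \<in> herm V" unfolding scaleR_fun_def by (rule herm_scaleR)
qed

end

context opsys_eps begin

lemma A2: assumes s: "\<phi> \<in> Seps V \<epsilon>" shows "\<phi> \<in> Aeps V \<epsilon>"
proof -
  note sp = Seps_props[OF s]
  define M where "M = (1 + \<epsilon>) / 2"
  have M1: "M \<ge> 1" using eps by (simp add: M_def)
  define f where "f = (\<lambda>h. Re (\<phi> h))"
  obtain u0 :: 'h where u0: "u0 \<noteq> 0"
  proof (cases "\<exists>u::'h. u \<noteq> 0")
    case True then show ?thesis using that by blast
  next
    case False
    then have "(\<lambda>x::'h. x) = (\<lambda>x. 0)" by auto
    then have "\<phi> (\<lambda>x. x) = 0" using lf_zero[OF sp(1)] by simp
    then show ?thesis using sp(2) by simp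
  qed
  have L: "f b \<le> M * t" if b: "b \<in> herm V" and b0: "\<And>u. 0 \<le> Q b u" and bt: "\<And>u. Q b u \<le> t * (norm u)\<^sup>2" for b t
  proof -
    have "0 \<le> t * (norm u0)\<^sup>2" using b0[of u0] bt[of u0] by linarith
    then have t0: "t \<ge> 0" using u0 by (simp add: zero_le_mult_iff)
    define p where "p = (\<lambda>x. b x + (- (t/2)) *\<^sub>R x)"
    have ph: "p \<in> herm V" unfolding p_def by (rule herm_addid[OF b])
    have Qp: "\<bar>Q p u\<bar> \<le> t / 2 * (norm u)\<^sup>2" for u
    proof -
      have qe: "Q p u = Q b u - t / 2 * (norm u)\<^sup>2" by (simp add: p_def Q_add Q_diff Q_scal)
      show ?thesis using qe b0[of u] bt[of u] by (simp add: abs_le_iff field_simps)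
    qed
    have onp: "onorm p \<le> t / 2" by (rule onorm_from_Q[OF ph _ Qp]) (simp add: t0)
    have "\<phi> p = \<phi> b + complex_of_real (- (t/2))"
      unfolding p_def using lf_addid[OF sp(1) herm_V[OF b], of "- (t/2)"] sp(2) by simp
    then have fb: "f b = Re (\<phi> p) + t / 2" by (simp add: f_def)
    have "Re (\<phi> p) \<le> cmod (\<phi> p)" by (rule complex_Re_le_cmod)
    also have "\<dots> \<le> \<epsilon> * onorm p" by (rule sp(4)[OF herm_V[OF ph]])
    also have "\<dots> \<le> \<epsilon> * (t / 2)" using eps by (intro mult_left_mono onp) simp
    finally show ?thesis using fb by (simp add: M_def field_simps)
  qed
  define F where "F = (\<lambda>v. {tb :: real \<times> ('h \<Rightarrow> 'h). snd tb \<in> herm V \<and> (\<forall>u. 0 \<le> Q (snd tb) u)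
                         \<and> (\<forall>u. Q v u + Q (snd tb) u \<le> fst tb * (norm u)\<^sup>2)})"
  define val where "val = (\<lambda>tb :: real \<times> ('h \<Rightarrow> 'h). M * fst tb - f (snd tb))"
  define pp where "pp = (\<lambda>v. Inf (val ` F v))"
  have Q0: "Q (\<lambda>x. 0) u = 0" for u by (simp add: Q_def)
  have f0: "f (\<lambda>x. 0) = 0" by (simp add: f_def lf_zero[OF sp(1)])
  have Fne: "val ` F v \<noteq> {}" if v: "v \<in> herm V" for v
  proof -
    have "(onorm v, \<lambda>x. 0) \<in> F v"
      using herm_Q_bound[OF v] by (auto simp: F_def Q0 herm_zero abs_le_iff)
    then show ?thesis by blast
  qed
  have Fbdd: "bdd_below (val ` F v)" if v: "v \<in> herm V" for v
  proof (rule bdd_belowI[of _ "- M * onorm v"])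
    fix y assume "y \<in> val ` F v"
    then obtain tb where tb: "tb \<in> F v" "y = val tb" by blast
    have "f (snd tb) \<le> M * (fst tb + onorm v)"
    proof (rule L)
      show "snd tb \<in> herm V" "\<And>u. 0 \<le> Q (snd tb) u" using tb by (auto simp: F_def)
      fix u
      have "Q v u + Q (snd tb) u \<le> fst tb * (norm u)\<^sup>2" using tb by (auto simp: F_def)
      moreover have "- Q v u \<le> onorm v * (norm u)\<^sup>2" using herm_Q_bound[OF v, of u] by (simp add: abs_le_iff)
      ultimately show "Q (snd tb) u \<le> (fst tb + onorm v) * (norm u)\<^sup>2" by (simp add: algebra_simps)
    qed
    then show "- M * onorm v \<le> y" using tb by (simp add: val_def algebra_simps)
  qed
  have pp_le: "pp v \<le> val tb" if "v \<in> herm V" "tb \<in> F v" for v tb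
    unfolding pp_def using that Fbdd by (intro cInf_lower) auto
  have pp_sub: "sublin (herm V) pp"
    unfolding sublin_def
  proof (intro conjI ballI allI impI)
    fix v w assume v: "v \<in> herm V" and w: "w \<in> herm V"
    have vw: "v + w = (\<lambda>x. v x + w x)" by (simp add: plus_fun_def)
    have vwh: "v + w \<in> herm V" unfolding vw by (rule herm_add[OF v w])
    have "pp (v + w) \<le> a + b" if a: "a \<in> val ` F v" and b: "b \<in> val ` F w" for a b
    proof -
      obtain tb1 where t1: "tb1 \<in> F v" "a = val tb1" using a by blast
      obtain tb2 where t2: "tb2 \<in> F w" "b = val tb2" using b by blast
      have b1: "snd tb1 \<in> herm V" and b2: "snd tb2 \<in> herm V" using t1 t2 by (auto simp: F_def)
      have i1: "Q v u + Q (snd tb1) u \<le> fst tb1 * (norm u)\<^sup>2" "0 \<le> Q (snd tb1) u" for u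
        using t1(1) by (auto simp: F_def)
      have i2: "Q w u + Q (snd tb2) u \<le> fst tb2 * (norm u)\<^sup>2" "0 \<le> Q (snd tb2) u" for u
        using t2(1) by (auto simp: F_def)
      have mem: "(fst tb1 + fst tb2, \<lambda>x. snd tb1 x + snd tb2 x) \<in> F (v + w)"
        unfolding F_def vw mem_Collect_eq fst_conv snd_conv
      proof (intro conjI allI herm_add b1 b2)
        fix u
        show "0 \<le> Q (\<lambda>x. snd tb1 x + snd tb2 x) u" using i1(2)[of u] i2(2)[of u] by (simp add: Q_add)
        have "Q v u + Q w u + (Q (snd tb1) u + Q (snd tb2) u) \<le> fst tb1 * (norm u)\<^sup>2 + fst tb2 * (norm u)\<^sup>2"
          using add_mono[OF i1(1)[of u] i2(1)[of u]] by (simp add: algebra_simps)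
        then show "Q (\<lambda>x. v x + w x) u + Q (\<lambda>x. snd tb1 x + snd tb2 x) u \<le> (fst tb1 + fst tb2) * (norm u)\<^sup>2"
          by (simp add: Q_add distrib_right)
      qed
      have "pp (v + w) \<le> val (fst tb1 + fst tb2, \<lambda>x. snd tb1 x + snd tb2 x)" by (rule pp_le[OF vwh mem])
      also have "\<dots> = a + b"
        using t1 t2 lf_add[OF sp(1) herm_V[OF b1] herm_V[OF b2]] by (simp add: val_def f_def algebra_simps)
      finally show ?thesis .
    qed
    then have "pp (v + w) \<le> Inf (val ` F v) + Inf (val ` F w)" by (intro cInf_add_bound Fne v w)
    then show "pp (v + w) \<le> pp v + pp w" by (simp add: pp_def)
  next
    fix v and s :: real assume v: "v \<in> herm V" and s: "0 \<le> s"
    have sv: "s *\<^sub>R v = (\<lambda>x. s *\<^sub>R v x)" by (simp add: scaleR_fun_def)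
    have svh: "s *\<^sub>R v \<in> herm V" unfolding sv by (rule herm_scaleR[OF v])
    show "pp (s *\<^sub>R v) \<le> s * pp v"
    proof (cases "s = 0")
      case True
      have "(0, \<lambda>x. 0) \<in> F (s *\<^sub>R v)" using True by (auto simp: F_def sv Q0 herm_zero Q_scaleR Q_def)
      then have "pp (s *\<^sub>R v) \<le> val (0, \<lambda>x. 0)" by (rule pp_le[OF svh])
      then show ?thesis using True f0 by (simp add: val_def)
    next
      case False
      then have sp0: "s > 0" using s by simp
      have "pp (s *\<^sub>R v) \<le> s * a" if a: "a \<in> val ` F v" for a
      proof -
        obtain tb where tb: "tb \<in> F v" "a = val tb" using a by blast
        have b: "snd tb \<in> herm V" using tb by (auto simp: F_def)
        have mem: "(s * fst tb, \<lambda>x. s *\<^sub>R snd tb x) \<in> F (s *\<^sub>R v)"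
        proof -
          have "\<forall>u. 0 \<le> Q (snd tb) u" "\<forall>u. Q v u + Q (snd tb) u \<le> fst tb * (norm u)\<^sup>2" using tb by (auto simp: F_def)
          then have "\<forall>u. s * Q v u + s * Q (snd tb) u \<le> s * fst tb * (norm u)\<^sup>2"
            using s by (metis distrib_left mult.assoc mult_left_mono)
          then show ?thesis using tb s unfolding F_def sv
            by (auto simp: Q_scaleR herm_scaleR b F_def)
        qed
        have "pp (s *\<^sub>R v) \<le> val (s * fst tb, \<lambda>x. s *\<^sub>R snd tb x)" by (rule pp_le[OF svh mem])
        also have "\<dots> = s * a"
          unfolding tb(2) using lf_scaleR[OF sp(1) herm_V[OF b]] by (simp add: val_def f_def algebra_simps)
        finally show ?thesis .
      qed
      then have "pp (s *\<^sub>R v) \<le> s * Inf (val ` F v)" by (intro cInf_scale_bound[OF Fne[OF v] sp0])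
      then show ?thesis by (simp add: pp_def)
    qed
  qed
  have me: "- (\<lambda>x::'h. x) = (\<lambda>x. - x)" by (simp add: fun_Compl_def)
  have meh: "(\<lambda>x::'h. - x) \<in> herm V" by (rule herm_minus[OF herm_id])
  have pp_me: "pp (- (\<lambda>x. x)) \<le> - M"
  proof -
    have "(-1, \<lambda>x. 0) \<in> F (\<lambda>x. - x)" by (auto simp: F_def Q0 herm_zero Q_minus Q_id)
    then have "pp (\<lambda>x. - x) \<le> val (-1, \<lambda>x. 0)" by (rule pp_le[OF meh])
    then show ?thesis using f0 by (simp add: val_def me)
  qed
  have hb: "\<exists>g. (\<forall>x\<in>herm V. \<forall>y\<in>herm V. g (x + y) = g x + g y) \<and> (\<forall>x\<in>herm V. \<forall>r. g (r *\<^sub>R x) = r * g x)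
           \<and> (\<forall>x\<in>herm V. g x \<le> pp x) \<and> g (- (\<lambda>x. x)) \<le> - M"
    apply (rule hahn_banach_min[OF subsp_herm pp_sub herm_id])
    apply (rule pp_me)
    done
  then obtain g where g1: "\<forall>x\<in>herm V. \<forall>y\<in>herm V. g (x + y) = g x + g y"
    and g2: "\<forall>x\<in>herm V. \<forall>r. g (r *\<^sub>R x) = r * g x"
    and g3: "\<forall>x\<in>herm V. g x \<le> pp x" and gme: "g (- (\<lambda>x. x)) \<le> - M"
    by (elim exE conjE)
  have gadd: "\<And>x y. x \<in> herm V \<Longrightarrow> y \<in> herm V \<Longrightarrow> g (x + y) = g x + g y" using g1 by simp
  have gsc: "\<And>x r. x \<in> herm V \<Longrightarrow> g (r *\<^sub>R x) = r * g x" using g2 by simp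
  have gp: "\<And>x. x \<in> herm V \<Longrightarrow> g x \<le> pp x" using g3 by simp
  have gneg: "g (\<lambda>x. - h x) = - g h" if "h \<in> herm V" for h
    using gsc[OF that, of "-1"] by (simp add: scaleR_fun_def)
  have gzero: "g (\<lambda>x. 0) = 0" using gsc[OF herm_zero, of 0] by (simp add: scaleR_fun_def)
  have gadd': "g (\<lambda>x. a x + b x) = g a + g b" if "a \<in> herm V" "b \<in> herm V" for a b
    using gadd[OF that] by (simp add: plus_fun_def)
  have gsc': "g (\<lambda>x. r *\<^sub>R a x) = r * g a" if "a \<in> herm V" for a r
    using gsc[OF that] by (simp add: scaleR_fun_def)
  have ge: "g (\<lambda>x. x) = M"
  proof -
    have "g (\<lambda>x. - x) = - g (\<lambda>x. x)" using gneg[OF herm_id] by simp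
    then have a: "g (\<lambda>x. x) \<ge> M" using gme by (simp add: me)
    have "(1, \<lambda>x. 0) \<in> F (\<lambda>x. x)" by (auto simp: F_def Q0 herm_zero Q_id)
    then have "pp (\<lambda>x. x) \<le> val (1, \<lambda>x. 0)" by (rule pp_le[OF herm_id])
    then have "g (\<lambda>x. x) \<le> M" using gp[OF herm_id] f0 by (simp add: val_def)
    then show ?thesis using a by simp
  qed
  have gpos: "0 \<le> g P \<and> f P \<le> g P" if P: "P \<in> Vpos V" for P
  proof -
    have Ph: "P \<in> herm V" by (rule Vpos_herm[OF P])
    have mPh: "(\<lambda>x. - P x) \<in> herm V" by (rule herm_minus[OF Ph])
    have "(0, \<lambda>x. 0) \<in> F (\<lambda>x. - P x)"
      using Vpos_Q[OF P] by (auto simp: F_def Q0 herm_zero Q_minus)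
    then have "pp (\<lambda>x. - P x) \<le> val (0, \<lambda>x. 0)" by (rule pp_le[OF mPh])
    then have a: "- g P \<le> 0" using gp[OF mPh] gneg[OF Ph] f0 by (simp add: val_def)
    have "(0, P) \<in> F (\<lambda>x. - P x)"
      using Vpos_Q[OF P] by (auto simp: F_def Ph Q_minus)
    then have "pp (\<lambda>x. - P x) \<le> val (0, P)" by (rule pp_le[OF mPh])
    then have b: "- g P \<le> - f P" using gp[OF mPh] gneg[OF Ph] by (simp add: val_def)
    show ?thesis using a b by simp
  qed
  define G where "G = (\<lambda>T. if T \<in> V then complex_of_real (g (Hp T)) + \<i> * complex_of_real (g (Hm T)) else 0)"
  have G_add: "G (\<lambda>x. S x + T x) = G S + G T" if S: "S \<in> V" and T: "T \<in> V" for S T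
    using S T V_add[OF S T]
    by (simp add: G_def Hp_add Hm_add gadd'[OF Hp_herm[OF S] Hp_herm[OF T]] gadd'[OF Hm_herm[OF S] Hm_herm[OF T]] algebra_simps)
  have G_scaleR: "G (\<lambda>x. r *\<^sub>R T x) = complex_of_real r * G T" if T: "T \<in> V" for T r
    using T V_scaleR[OF T]
    by (simp add: G_def Hp_scaleR Hm_scaleR gsc'[OF Hp_herm[OF T]] gsc'[OF Hm_herm[OF T]] algebra_simps)
  have G_i: "G (\<lambda>x. \<i> *\<^sub>C T x) = \<i> * G T" if T: "T \<in> V" for T
    using T V_scaleC[OF T]
    by (simp add: G_def Hp_i Hm_i gneg[OF Hm_herm[OF T]] algebra_simps)
  have vecC: "c *\<^sub>C v = Re c *\<^sub>R v + Im c *\<^sub>R (\<i> *\<^sub>C v)" for c and v :: 'h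
  proof -
    have "c = complex_of_real (Re c) + complex_of_real (Im c) * \<i>" by (simp add: complex_eq_iff)
    then have "c *\<^sub>C v = (complex_of_real (Re c) + complex_of_real (Im c) * \<i>) *\<^sub>C v" by simp
    also have "\<dots> = Re c *\<^sub>R v + Im c *\<^sub>R (\<i> *\<^sub>C v)"
      by (simp only: scaleC_add_left scaleR_scaleC scaleC_scaleC)
    finally show ?thesis .
  qed
  have G_scaleC: "G (\<lambda>x. c *\<^sub>C T x) = c * G T" if T: "T \<in> V" for T c
  proof -
    have "(\<lambda>x. c *\<^sub>C T x) = (\<lambda>x. Re c *\<^sub>R T x + Im c *\<^sub>R (\<i> *\<^sub>C T x))" by (rule ext, rule vecC)
    then have "G (\<lambda>x. c *\<^sub>C T x) = G (\<lambda>x. Re c *\<^sub>R T x) + G (\<lambda>x. Im c *\<^sub>R (\<i> *\<^sub>C T x))"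
      using G_add[OF V_scaleR[OF T] V_scaleR[OF V_scaleC[OF T]]] by simp
    also have "\<dots> = complex_of_real (Re c) * G T + complex_of_real (Im c) * (\<i> * G T)"
      using G_scaleR[OF T] G_scaleR[OF V_scaleC[OF T]] G_i[OF T] by simp
    also have "\<dots> = c * G T" by (simp add: complex_eq_iff algebra_simps)
    finally show ?thesis .
  qed
  have Gl: "lin_func V G"
    unfolding lin_func_def using G_add G_scaleC by (simp add: G_def)
  have G_herm: "G h = complex_of_real (g h)" if h: "h \<in> herm V" for h
    using h herm_V[OF h] by (simp add: G_def Hp_herm_eq Hm_herm_eq gzero)
  have Ge: "G (\<lambda>x. x) = complex_of_real M" using G_herm[OF herm_id] ge by simp
  have Gpos: "Im (G P) = 0 \<and> 0 \<le> Re (G P)" if P: "P \<in> Vpos V" for P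
    using G_herm[OF Vpos_herm[OF P]] gpos[OF P] by simp
  have phP: "\<phi> P = complex_of_real (f P)" if P: "P \<in> Vpos V" for P
    using sp(3)[OF Vpos_herm[OF P]] by (simp add: f_def complex_eq_iff)
  have Kl: "lin_func V (\<lambda>T. 1 * G T + (-1) * \<phi> T)" by (rule lf_comb[OF Gl sp(1)])
  have Kpos: "Im (1 * G P + (-1) * \<phi> P) = 0 \<and> 0 \<le> Re (1 * G P + (-1) * \<phi> P)" if P: "P \<in> Vpos V" for P
    using G_herm[OF Vpos_herm[OF P]] gpos[OF P] phP[OF P] by simp
  define s where "s = (\<epsilon> - 1) / 2"
  have s0: "s \<ge> 0" using eps by (simp add: s_def)
  have sM: "1 + s = M" by (simp add: s_def M_def field_simps)
  define \<phi>' where "\<phi>' = (\<lambda>T. (1 / complex_of_real M) * G T + 0 * G T)"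
  have M0: "M > 0" using M1 by simp
  have st1: "\<phi>' \<in> states V (Vpos V)"
    unfolding states_def
  proof (intro CollectI conjI ballI)
    show "lin_func V \<phi>'" unfolding \<phi>'_def by (rule lf_comb[OF Gl Gl])
    fix P assume P: "P \<in> Vpos V"
    show "Im (\<phi>' P) = 0" using Gpos[OF P] by (simp add: \<phi>'_def Im_divide)
    show "0 \<le> Re (\<phi>' P)" using Gpos[OF P] M0 by (simp add: \<phi>'_def Re_divide)
  next
    show "\<phi>' id = 1" using Ge M0 by (simp add: \<phi>'_def id_lam)
  qed
  show ?thesis
  proof (cases "s = 0")
    case True
    then have M1': "M = 1" using sM by simp
    have ke: "1 * G (\<lambda>x. x) + (-1) * \<phi> (\<lambda>x. x) = 0" using Ge M1' sp(2) by simp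
    have kz: "1 * G T + (-1) * \<phi> T = 0" for T
      using pos_zero[OF Kl Kpos, of T] ke by blast
    have "\<phi> = (\<lambda>T. complex_of_real (1 + 0) * \<phi>' T - complex_of_real 0 * \<phi>' T)"
    proof
      fix T show "\<phi> T = complex_of_real (1 + 0) * \<phi>' T - complex_of_real 0 * \<phi>' T"
        using kz[of T] M1' by (simp add: \<phi>'_def)
    qed
    then have eq: "\<phi> = (\<lambda>T. complex_of_real (1 + 0) * \<phi>' T - complex_of_real 0 * \<phi>' T)" .
    show ?thesis unfolding Aeps_def mem_Collect_eq
      by (intro exI[of _ \<phi>'] exI[of _ "0::real"] conjI eq st1) (use eps in simp_all)
  next
    case False
    then have sp0: "s > 0" using s0 by simp
    define \<psi> where "\<psi> = (\<lambda>T. (1 / complex_of_real s) * (1 * G T + (-1) * \<phi> T) + 0 * G T)"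
    have st2: "\<psi> \<in> states V (Vpos V)"
      unfolding states_def
    proof (intro CollectI conjI ballI)
      show "lin_func V \<psi>" unfolding \<psi>_def by (rule lf_comb[OF Kl Gl])
      fix P assume P: "P \<in> Vpos V"
      show "Im (\<psi> P) = 0" using Kpos[OF P] by (simp add: \<psi>_def Im_divide)
      show "0 \<le> Re (\<psi> P)" using Kpos[OF P] sp0 by (simp add: \<psi>_def Re_divide)
    next
      have "\<psi> (\<lambda>x. x) = (complex_of_real M - 1) / complex_of_real s" using Ge sp(2) by (simp add: \<psi>_def)
      also have "\<dots> = 1" using sM[symmetric] sp0 by (simp add: field_simps)
      finally show "\<psi> id = 1" by (simp add: id_lam)
    qed
    have "\<phi> = (\<lambda>T. complex_of_real (1 + s) * \<phi>' T - complex_of_real s * \<psi> T)"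
    proof
      fix T
      show "\<phi> T = complex_of_real (1 + s) * \<phi>' T - complex_of_real s * \<psi> T"
        using sM M0 sp0 by (simp add: \<phi>'_def \<psi>_def field_simps)
    qed
    then have eq: "\<phi> = (\<lambda>T. complex_of_real (1 + s) * \<phi>' T - complex_of_real s * \<psi> T)" .
    show ?thesis unfolding Aeps_def mem_Collect_eq
      by (intro exI[of _ \<phi>'] exI[of _ \<psi>] exI[of _ s] conjI eq st1 st2 s0) (simp add: s_def)
  qed
qed

end

theorem lemma3p1:
  fixes V :: "('h::chilbert_space \<Rightarrow> 'h) set" and \<epsilon> :: real
  assumes "operator_system V" and "\<epsilon> \<ge> 1"
  shows "unital_cone V (Veps V \<epsilon>) \<and> states V (Veps V \<epsilon>) = Seps V \<epsilon> \<and> Seps V \<epsilon> = Aeps V \<epsilon>"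
proof -
  interpret opsys_eps V \<epsilon>
    using assms by (simp add: opsys_eps_def opsys_def opsys_eps_axioms_def)
  have 1: "states V (Veps V \<epsilon>) = Seps V \<epsilon>" using S1 S2 by blast
  have 2: "Seps V \<epsilon> = Aeps V \<epsilon>" using A1 A2 by blast
  show ?thesis using Veps_unital 1 2 by simp
qed

end
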